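(* Consider the two-well model with stochastically perturbed dynamics described in the context, with $H^{\varepsilon,\delta}(0)=H_0>H(O)$, and fix $T<\infty$. Within each edge of $\Gamma$, for $0<t<T$, the process $\widehat H^{\varepsilon,\delta}(t)$ converges in probability, as $\varepsilon,\delta\downarrow0$, to the deterministic motion $H(t)$ defined by $$H(t)=\Big(\frac{t}{\sqrt2}\frac{c_1+c_2}{a_1+a_2}+H_0^{-1/2}\Big)^{-2}\ \text{on } I_3,\quad H(t)=\Big(\frac{t-t_0}{\sqrt2}\frac{c_1+c_3}{a_1}+H(O)^{-1/2}\Big)^{-2}\ \text{on } I_1,\quad H(t)=\Big(\frac{t-t_0}{\sqrt2}\frac{c_2+c_3}{a_2}+H(O)^{-1/2}\Big)^{-2}\ \text{on } I_2,$$ where $t_0=\frac{\sqrt2(a_1+a_2)(H(O)^{-1/2}-H_0^{-1/2})}{c_1+c_2}$.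
   Context: Fix $a_1,a_2>0$, $H(O)>0$, and positive constants $c_1,c_2,c_3$. Phase space $\sqcap=\{(q,p):-a_1\le q\le a_2\}$, energy $H=p^2/2$. A unit-mass particle moves freely; with energy $>H(O)$ it moves in $[-a_1,a_2]$ reflecting at $q=-a_1$ and $q=a_2$; with energy $\le H(O)$ it is confined to the well $\mathcal E_1=[-a_1,0]$ or $\mathcal E_2=[0,a_2]$ in which it is, reflecting at both ends. Let $\{\xi_k\},\{\eta_k\},\{\zeta_k\}$ be independent sequences of i.i.d. random variables with continuous densities, with $P\{\alpha<\xi_k<\beta\}=P\{\alpha<\eta_k<\beta\}=P\{\alpha<\zeta_k<\beta\}=1$ for some $0<\alpha<\beta<\infty$. For $0<\varepsilon\ll1$, $0<\delta\ll1$: at the $k$-th collision with $q=-a_1$ the speed is multiplied by $1-\varepsilon c_1-\varepsilon\delta\eta_k$; at the $k$-th collision with $q=a_2$ by $1-\varepsilon c_2-\varepsilon\delta\xi_k$; at the $k$-th collision with the interior wall $q=0$ by $1-\varepsilon c_3-\varepsilon\delta\zeta_k$. The resulting process is $X^{\varepsilon,\delta}_t$; $\widetilde X^{\varepsilon,\delta}_t=X^{\varepsilon,\delta}_{t/\varepsilon}$; $H^{\varepsilon,\delta}(t)=H(\widetilde X^{\varepsilon,\delta}_t)$, a right-continuous step function, and $\widehat H^{\varepsilon,\delta}(t)$ is the continuous piecewise linear function obtained by connecting neighboring discontinuity points of its graph by straight line segments. The graph $\Gamma$ has interior vertex $O$ at energy $H(O)$ and edges $I_3$ (energy $>H(O)$),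 $I_1$ (energy $<H(O)$ in $\mathcal E_1$), $I_2$ (energy $<H(O)$ in $\mathcal E_2$). *)

theory Defs
  imports "HOL-Probability.Probability"
begin

text \<open>Deterministic two-well billiard driven by given multiplier sequences.
 Model parameters: a1 a2 (well sizes), HO = H(O), c1 c2 c3, eps, del,
 sequences eta (wall q=-a1), xi (wall q=a2), zeta (interior wall q=0).
 A collision state is (tau, q, p, k1, k2, k3): time of the collision,
 position, momentum right after it, and the numbers of collisions so far
 with q=-a1, q=a2, q=0 respectively.\<close>

definition next_wall :: "real \<Rightarrow> real \<Rightarrow> real \<Rightarrow> real \<Rightarrow> real \<Rightarrow> real" where
  "next_wall a1 a2 HO q p =
     (if p > 0 then (if p\<^sup>2 / 2 > HO \<or> q \<ge> 0 then a2 else 0)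
      else (if p\<^sup>2 / 2 > HO \<or> q \<le> 0 then - a1 else 0))"

definition coll_step ::
  "real \<Rightarrow> real \<Rightarrow> real \<Rightarrow> real \<Rightarrow> real \<Rightarrow> real \<Rightarrow> real \<Rightarrow> real \<Rightarrow>
   (nat \<Rightarrow> real) \<Rightarrow> (nat \<Rightarrow> real) \<Rightarrow> (nat \<Rightarrow> real) \<Rightarrow>
   real \<times> real \<times> real \<times> nat \<times> nat \<times> nat \<Rightarrow> real \<times> real \<times> real \<times> nat \<times> nat \<times> nat" where
  "coll_step a1 a2 HO c1 c2 c3 eps del eta xi zeta s =
     (case s of (tau, q, p, k1, k2, k3) \<Rightarrow>
       (let w = next_wall a1 a2 HO q p; tau' = tau + \<bar>w - q\<bar> / \<bar>p\<bar> in
        if w = - a1 then (tau', w, - p * (1 - eps * c1 - eps * del * eta k1), Suc k1, k2, k3)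
        else if w = a2 then (tau', w, - p * (1 - eps * c2 - eps * del * xi k2), k1, Suc k2, k3)
        else (tau', w, - p * (1 - eps * c3 - eps * del * zeta k3), k1, k2, Suc k3)))"

definition coll ::
  "real \<Rightarrow> real \<Rightarrow> real \<Rightarrow> real \<Rightarrow> real \<Rightarrow> real \<Rightarrow> real \<Rightarrow> real \<Rightarrow>
   (nat \<Rightarrow> real) \<Rightarrow> (nat \<Rightarrow> real) \<Rightarrow> (nat \<Rightarrow> real) \<Rightarrow> real \<Rightarrow> real \<Rightarrow>
   nat \<Rightarrow> real \<times> real \<times> real \<times> nat \<times> nat \<times> nat" where
  "coll a1 a2 HO c1 c2 c3 eps del eta xi zeta q0 p0 n =
     (coll_step a1 a2 HO c1 c2 c3 eps del eta xi zeta ^^ n) (0, q0, p0, 0, 0, 0)"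

definition ctime :: "real \<times> real \<times> real \<times> nat \<times> nat \<times> nat \<Rightarrow> real" where
  "ctime s = fst s"
definition cpos :: "real \<times> real \<times> real \<times> nat \<times> nat \<times> nat \<Rightarrow> real" where
  "cpos s = fst (snd s)"
definition cmom :: "real \<times> real \<times> real \<times> nat \<times> nat \<times> nat \<Rightarrow> real" where
  "cmom s = fst (snd (snd s))"
definition cenergy :: "real \<times> real \<times> real \<times> nat \<times> nat \<times> nat \<Rightarrow> real" where
  "cenergy s = (cmom s)\<^sup>2 / 2"

definition cedge :: "real \<Rightarrow> (real \<times> real \<times> real \<times> nat \<times> nat \<times> nat) \<Rightarrow> nat" where
  "cedge HO s = (if cenergy s > HO then 3
                 else if cpos s < 0 \<or> (cpos s = 0 \<and> cmom s < 0) then 1 else 2)"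

definition cidx ::
  "real \<Rightarrow> real \<Rightarrow> real \<Rightarrow> real \<Rightarrow> real \<Rightarrow> real \<Rightarrow> real \<Rightarrow> real \<Rightarrow>
   (nat \<Rightarrow> real) \<Rightarrow> (nat \<Rightarrow> real) \<Rightarrow> (nat \<Rightarrow> real) \<Rightarrow> real \<Rightarrow> real \<Rightarrow> real \<Rightarrow> nat" where
  "cidx a1 a2 HO c1 c2 c3 eps del eta xi zeta q0 p0 u =
     (LEAST n. u < ctime (coll a1 a2 HO c1 c2 c3 eps del eta xi zeta q0 p0 (Suc n)))"

definition edge_at ::
  "real \<Rightarrow> real \<Rightarrow> real \<Rightarrow> real \<Rightarrow> real \<Rightarrow> real \<Rightarrow> real \<Rightarrow> real \<Rightarrow>
   (nat \<Rightarrow> real) \<Rightarrow> (nat \<Rightarrow> real) \<Rightarrow> (nat \<Rightarrow> real) \<Rightarrow> real \<Rightarrow> real \<Rightarrow> real \<Rightarrow> nat" where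
  "edge_at a1 a2 HO c1 c2 c3 eps del eta xi zeta q0 p0 t =
     cedge HO (coll a1 a2 HO c1 c2 c3 eps del eta xi zeta q0 p0
                 (cidx a1 a2 HO c1 c2 c3 eps del eta xi zeta q0 p0 (t / eps)))"

text \<open>The piecewise linear interpolation \<open>\<hat>H\<close> at slow time t of the step function
  H(X_{t/eps}), through the points (eps*tau_n, energy after n-th collision).\<close>
definition Hhat ::
  "real \<Rightarrow> real \<Rightarrow> real \<Rightarrow> real \<Rightarrow> real \<Rightarrow> real \<Rightarrow> real \<Rightarrow> real \<Rightarrow>
   (nat \<Rightarrow> real) \<Rightarrow> (nat \<Rightarrow> real) \<Rightarrow> (nat \<Rightarrow> real) \<Rightarrow> real \<Rightarrow> real \<Rightarrow> real \<Rightarrow> real" where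
  "Hhat a1 a2 HO c1 c2 c3 eps del eta xi zeta q0 p0 t =
     (let S = coll a1 a2 HO c1 c2 c3 eps del eta xi zeta q0 p0;
          u = t / eps;
          n = cidx a1 a2 HO c1 c2 c3 eps del eta xi zeta q0 p0 u
      in cenergy (S n) + (cenergy (S (Suc n)) - cenergy (S n)) *
           ((u - ctime (S n)) / (ctime (S (Suc n)) - ctime (S n))))"

definition t0_time :: "real \<Rightarrow> real \<Rightarrow> real \<Rightarrow> real \<Rightarrow> real \<Rightarrow> real \<Rightarrow> real" where
  "t0_time a1 a2 c1 c2 HO H0 = sqrt 2 * (a1 + a2) * (1 / sqrt HO - 1 / sqrt H0) / (c1 + c2)"

definition Hlim3 :: "real \<Rightarrow> real \<Rightarrow> real \<Rightarrow> real \<Rightarrow> real \<Rightarrow> real \<Rightarrow> real" where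
  "Hlim3 a1 a2 c1 c2 H0 t = 1 / (t / sqrt 2 * ((c1 + c2) / (a1 + a2)) + 1 / sqrt H0)\<^sup>2"

definition Hlim1 :: "real \<Rightarrow> real \<Rightarrow> real \<Rightarrow> real \<Rightarrow> real \<Rightarrow> real \<Rightarrow> real" where
  "Hlim1 a1 c1 c3 HO t0 t = 1 / ((t - t0) / sqrt 2 * ((c1 + c3) / a1) + 1 / sqrt HO)\<^sup>2"

definition Hlim2 :: "real \<Rightarrow> real \<Rightarrow> real \<Rightarrow> real \<Rightarrow> real \<Rightarrow> real \<Rightarrow> real" where
  "Hlim2 a2 c2 c3 HO t0 t = 1 / ((t - t0) / sqrt 2 * ((c2 + c3) / a2) + 1 / sqrt HO)\<^sup>2"

end

theory Submission
  imports Defs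
begin

lemma genG:
  fixes w tau s r :: "nat \<Rightarrow> real" and L k e R D cb :: real
  assumes L: "L > 0" and e: "e \<ge> 0" and cb: "cb = k * L" and cbp: "cb \<ge> 0" and R: "R \<ge> 0"
    and tstep: "\<And>j. N0 \<le> j \<Longrightarrow> j < n \<Longrightarrow> tau (Suc j) = tau j + L * w j"
    and wstep: "\<And>j. N0 \<le> j \<Longrightarrow> j < n \<Longrightarrow> w (Suc j) = w j + e * w j * (cb + s j + r j)"
    and rb: "\<And>j. N0 \<le> j \<Longrightarrow> j < n \<Longrightarrow> \<bar>r j\<bar> \<le> R"
    and salt: "\<And>j. s (Suc j) = - s j"
    and sb: "\<And>j. \<bar>s j\<bar> \<le> D"
    and wpos: "\<And>j. N0 \<le> j \<Longrightarrow> j \<le> n \<Longrightarrow> w j \<ge> 0"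
    and Nn: "N0 \<le> n"
  shows "\<bar>w n - w N0 - e * k * (tau n - tau N0)\<bar>
          \<le> e * (R + e * D * (cb + D + R) / 2) / L * (tau n - tau N0) + e * D * (w n + w N0) / 2"
proof -
  define rho where "rho = R + e * D * (cb + D + R) / 2"
  have D0: "D \<ge> 0" using sb[of 0] by linarith
  have main: "\<forall>m. N0 + m \<le> n \<longrightarrow>
     \<bar>(w (N0+m) - e*k*tau (N0+m) + e * s (N0+m) * w (N0+m) / 2)
      - (w N0 - e*k*tau N0 + e * s N0 * w N0 / 2)\<bar> \<le> e * rho / L * (tau (N0+m) - tau N0)"
  proof (intro allI impI)
    fix m assume "N0 + m \<le> n"
    then show "\<bar>(w (N0+m) - e*k*tau (N0+m) + e * s (N0+m) * w (N0+m) / 2)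
      - (w N0 - e*k*tau N0 + e * s N0 * w N0 / 2)\<bar> \<le> e * rho / L * (tau (N0+m) - tau N0)"
    proof (induction m)
      case 0 then show ?case by simp
    next
      case (Suc m)
      let ?j = "N0 + m"
      have j1: "N0 \<le> ?j" "?j < n" using Suc.prems by auto
      have IH: "\<bar>(w ?j - e*k*tau ?j + e * s ?j * w ?j / 2)
        - (w N0 - e*k*tau N0 + e * s N0 * w N0 / 2)\<bar> \<le> e * rho / L * (tau ?j - tau N0)"
        using Suc by auto
      have ts: "tau (Suc ?j) = tau ?j + L * w ?j" using tstep j1 by blast
      have ws: "w (Suc ?j) = w ?j + e * w ?j * (cb + s ?j + r ?j)" using wstep j1 by blast
      have rj: "\<bar>r ?j\<bar> \<le> R" using rb j1 by blast
      have sj: "\<bar>s ?j\<bar> \<le> D" using sb by blast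
      have wj: "w ?j \<ge> 0" using wpos j1 by auto
      have diffeq: "(w (Suc ?j) - e*k*tau (Suc ?j) + e * s (Suc ?j) * w (Suc ?j) / 2)
           - (w ?j - e*k*tau ?j + e * s ?j * w ?j / 2)
           = e * w ?j * (r ?j - e * s ?j * (cb + s ?j + r ?j) / 2)"
        unfolding ws ts cb salt by (simp add: field_simps)
      have b1: "\<bar>r ?j - e * s ?j * (cb + s ?j + r ?j) / 2\<bar> \<le> rho"
      proof -
        have cb0: "cb \<ge> 0" using cbp .
        have "\<bar>e * s ?j * (cb + s ?j + r ?j)\<bar> \<le> e * D * (cb + D + R)"
          unfolding abs_mult using e sj rj cb0
          by (intro mult_mono) auto
        then show ?thesis unfolding rho_def using rj by (simp add: abs_le_iff) 
      qed
      have "\<bar>e * w ?j * (r ?j - e * s ?j * (cb + s ?j + r ?j) / 2)\<bar> \<le> e * w ?j * rho"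
        unfolding abs_mult using e wj b1 by (simp add: mult_left_mono)
      also have "e * w ?j * rho = e * rho / L * (tau (Suc ?j) - tau ?j)"
        using ts L by (simp add: field_simps)
      finally have st: "\<bar>(w (Suc ?j) - e*k*tau (Suc ?j) + e * s (Suc ?j) * w (Suc ?j) / 2)
           - (w ?j - e*k*tau ?j + e * s ?j * w ?j / 2)\<bar> \<le> e * rho / L * (tau (Suc ?j) - tau ?j)"
        using diffeq by simp
      have "e * rho / L * (tau (Suc ?j) - tau N0) = e * rho / L * (tau (Suc ?j) - tau ?j) + e * rho / L * (tau ?j - tau N0)"
        by (simp add: algebra_simps)
      then show ?case using st IH by simp
    qed
  qed
  obtain m where m: "n = N0 + m" using Nn le_Suc_ex by blast
  have M: "\<bar>(w n - e*k*tau n + e * s n * w n / 2)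
      - (w N0 - e*k*tau N0 + e * s N0 * w N0 / 2)\<bar> \<le> e * rho / L * (tau n - tau N0)"
    using main m by auto
  have wn: "w n \<ge> 0" "w N0 \<ge> 0" using wpos Nn by auto
  have "\<bar>e * s n * w n / 2\<bar> \<le> e * D * w n / 2" unfolding abs_mult abs_divide
    using e wn sb[of n] by (simp add: mult_right_mono mult_left_mono)
  moreover have "\<bar>e * s N0 * w N0 / 2\<bar> \<le> e * D * w N0 / 2" unfolding abs_mult abs_divide
    using e wn sb[of N0] by (simp add: mult_right_mono mult_left_mono)
  ultimately have "\<bar>w n - w N0 - e * k * (tau n - tau N0)\<bar> \<le> e * rho / L * (tau n - tau N0) + e * D * (w n + w N0) / 2"
    using M by (simp add: abs_le_iff algebra_simps add_divide_distrib)
  then show ?thesis unfolding rho_def .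
qed
lemma genG2:
  fixes w tau c r :: "nat \<Rightarrow> real" and L k e R D cb :: real
  assumes L: "L > 0" and e: "e \<ge> 0" and cb: "cb = k * L" and cbp: "cb \<ge> 0" and R: "R \<ge> 0"
    and tstep: "\<And>j. N0 \<le> j \<Longrightarrow> j < n \<Longrightarrow> tau (Suc j) = tau j + L * w j"
    and wstep: "\<And>j. N0 \<le> j \<Longrightarrow> j < n \<Longrightarrow> w (Suc j) = w j + e * w j * (c j + r j)"
    and rb: "\<And>j. N0 \<le> j \<Longrightarrow> j < n \<Longrightarrow> \<bar>r j\<bar> \<le> R"
    and calt: "\<And>j. N0 \<le> j \<Longrightarrow> Suc j < n \<Longrightarrow> c (Suc j) = 2 * cb - c j"
    and cN: "N0 < n \<Longrightarrow> \<bar>c N0 - cb\<bar> \<le> D" and D: "D \<ge> 0"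
    and wpos: "\<And>j. N0 \<le> j \<Longrightarrow> j \<le> n \<Longrightarrow> w j \<ge> 0"
    and Nn: "N0 \<le> n"
  shows "\<bar>w n - w N0 - e * k * (tau n - tau N0)\<bar>
          \<le> e * (R + e * D * (cb + D + R) / 2) / L * (tau n - tau N0) + e * D * (w n + w N0) / 2"
proof (cases "N0 = n")
  case True
  then show ?thesis using e D wpos[of n] by simp
next
  case False
  then have lt: "N0 < n" using Nn by simp
  define sg where "sg = (-1)^N0 * (c N0 - cb)"
  define s where "s j = (-1)^j * sg" for j
  have salt: "s (Suc j) = - s j" for j by (simp add: s_def)
  have sb: "\<bar>s j\<bar> \<le> D" for j using cN[OF lt] by (simp add: s_def sg_def abs_mult power_abs)
  have cs: "\<forall>m. N0 + m < n \<longrightarrow> c (N0 + m) = cb + s (N0 + m)"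
  proof (intro allI impI)
    fix m assume "N0 + m < n"
    then show "c (N0 + m) = cb + s (N0 + m)"
    proof (induction m)
      case 0
      have "((-1::real)^N0) * (-1)^N0 = 1" by (simp flip: power_mult_distrib)
      then have "s N0 = c N0 - cb" unfolding s_def sg_def by (simp only: mult.assoc[symmetric]) simp
      then show ?case by simp
    next
      case (Suc m)
      then have "c (N0 + Suc m) = 2 * cb - c (N0 + m)" using calt[of "N0 + m"] by simp
      moreover have "c (N0 + m) = cb + s (N0 + m)" using Suc by simp
      ultimately show ?case using salt[of "N0 + m"] by simp
    qed
  qed
  have ws: "w (Suc j) = w j + e * w j * (cb + s j + r j)" if j1: "N0 \<le> j" and j2: "j < n" for j
  proof -
    obtain m where jm: "j = N0 + m" using le_Suc_ex[OF j1] by blast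
    have "c j = cb + s j" using cs j2 unfolding jm by blast
    then show ?thesis using wstep[OF j1 j2] by (simp add: add.assoc)
  qed
  show ?thesis
    using genG[of L e cb k R N0 n tau w s r D, OF L e cb cbp R tstep ws rb salt sb wpos Nn] by blast
qed

locale bil =
  fixes a1 a2 HO c1 c2 c3 eps del :: real and eta xi zeta :: "nat \<Rightarrow> real" and q0 p0 B :: real
  assumes a1: "a1 > 0" and a2: "a2 > 0" and HO: "HO > 0"
    and c1: "c1 > 0" and c2: "c2 > 0" and c3: "c3 > 0"
    and eps: "eps > 0" and del: "del > 0" and del1: "del \<le> 1"
    and etab: "\<And>k. 0 \<le> eta k \<and> eta k \<le> B"
    and xib: "\<And>k. 0 \<le> xi k \<and> xi k \<le> B"
    and zetab: "\<And>k. 0 \<le> zeta k \<and> zeta k \<le> B"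
    and small: "eps * (c1 + c2 + c3 + B) \<le> 1/2"
    and q0: "-a1 \<le> q0" "q0 \<le> a2" and p0: "p0\<^sup>2 / 2 > HO"
begin

definition "S = coll a1 a2 HO c1 c2 c3 eps del eta xi zeta q0 p0"
definition "Gm = c1 + c2 + c3 + B"
definition "cw x = (if x = -a1 then c1 else if x = a2 then c2 else c3)"
definition "tau n = ctime (S n)"
definition "q n = cpos (S n)"
definition "p n = cmom (S n)"
definition "w n = 1 / \<bar>p n\<bar>"

lemma B0: "B \<ge> 0" using etab[of 0] by linarith

lemma S0: "S 0 = (0, q0, p0, 0, 0, 0)" by (simp add: S_def coll_def)
lemma S_Suc: "S (Suc n) = coll_step a1 a2 HO c1 c2 c3 eps del eta xi zeta (S n)"
  by (simp add: S_def coll_def)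

lemma step:
  obtains z where "0 \<le> z" "z \<le> B" "q (Suc n) = next_wall a1 a2 HO (q n) (p n)"
    "tau (Suc n) = tau n + \<bar>q (Suc n) - q n\<bar> / \<bar>p n\<bar>"
    "p (Suc n) = - p n * (1 - eps * (cw (q (Suc n)) + del * z))"
proof -
  obtain t0 q1 p1 k1 k2 k3 where Sn: "S n = (t0, q1, p1, k1, k2, k3)" by (cases "S n") auto
  define wl where "wl = next_wall a1 a2 HO q1 p1"
  have ne: "a2 \<noteq> -a1" "(0::real) \<noteq> -a1" "(0::real) \<noteq> a2" using a1 a2 by auto
  show ?thesis
  proof (cases "wl = -a1")
    case True
    show ?thesis
      apply (rule that[of "eta k1"])
      using True etab[of k1] Sn
      by (auto simp: S_Suc coll_step_def Let_def wl_def[symmetric] q_def tau_def p_def cpos_def ctime_def cmom_def cw_def algebra_simps)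
  next
    case F1: False
    show ?thesis
    proof (cases "wl = a2")
      case True
      show ?thesis
        apply (rule that[of "xi k2"])
        using True F1 xib[of k2] Sn ne
        by (auto simp: S_Suc coll_step_def Let_def wl_def[symmetric] q_def tau_def p_def cpos_def ctime_def cmom_def cw_def algebra_simps)
    next
      case False
      show ?thesis
        apply (rule that[of "zeta k3"])
        using False F1 zetab[of k3] Sn ne
        by (auto simp: S_Suc coll_step_def Let_def wl_def[symmetric] q_def tau_def p_def cpos_def ctime_def cmom_def cw_def algebra_simps)
    qed
  qed
qed

definition "R = 2 * (del * B + eps * Gm^2)"
definition "cmin = min c1 (min c2 c3)"

lemma cw_pos: "cw x > 0" and cw_le: "cw x \<le> Gm" and cw_ge: "cw x \<ge> cmin"
  using c1 c2 c3 B0 by (auto simp: cw_def Gm_def cmin_def)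
lemma cmin_pos: "cmin > 0" using c1 c2 c3 by (simp add: cmin_def)
lemma Gm_pos: "Gm > 0" using c1 c2 c3 B0 by (simp add: Gm_def)
lemma R0: "R \<ge> 0" using del B0 eps by (simp add: R_def)

lemma mult_bounds:
  assumes "0 \<le> z" "z \<le> B"
  shows "1/2 \<le> 1 - eps * (cw x + del * z)" "1 - eps * (cw x + del * z) < 1"
    "cw x + del * z \<le> Gm" "cw x \<le> cw x + del * z"
proof -
  have "del * z \<le> B" using assms del del1 by (metis mult_le_one mult_left_le_one_le order_trans mult_right_mono less_imp_le mult_1)
  then show g: "cw x + del * z \<le> Gm" using cw_def c1 c2 c3 B0 unfolding Gm_def cw_def by auto
  show "cw x \<le> cw x + del * z" using assms del by simp
  have "eps * (cw x + del * z) \<le> eps * Gm" using g eps by (simp add: mult_left_mono)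
  then show "1/2 \<le> 1 - eps * (cw x + del * z)" using small unfolding Gm_def by linarith
  have "cw x + del * z > 0" using cw_pos[of x] assms del by (simp add: add_pos_nonneg)
  then show "1 - eps * (cw x + del * z) < 1" using eps by simp
qed

lemma p_ne: "p n \<noteq> 0"
proof (induction n)
  case 0 then show ?case using p0 HO by (auto simp: p_def S0 cmom_def)
next
  case (Suc n)
  obtain z where z: "0 \<le> z" "z \<le> B" "p (Suc n) = - p n * (1 - eps * (cw (q (Suc n)) + del * z))"
    by (rule step)
  show ?case using z(3) Suc mult_bounds[OF z(1,2), of "q (Suc n)"] by auto
qed

lemma w_pos: "w n > 0" using p_ne by (simp add: w_def)

lemma wstep:
  obtains r where "0 \<le> r" "r \<le> R" "w (Suc n) = w n + eps * w n * (cw (q (Suc n)) + r)"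
proof -
  obtain z where z: "0 \<le> z" "z \<le> B" "p (Suc n) = - p n * (1 - eps * (cw (q (Suc n)) + del * z))"
    by (rule step)
  define c where "c = cw (q (Suc n))"
  define g where "g = c + del * z"
  define m where "m = 1 - eps * g"
  have mb: "1/2 \<le> m" "m < 1" "g \<le> Gm" "c \<le> g" using mult_bounds[OF z(1,2), of "q (Suc n)"]
    unfolding m_def g_def c_def by auto
  have cp: "c > 0" "c \<le> Gm" using cw_pos cw_le c_def by auto
  define r where "r = (del * z + eps * c * g) / m"
  have wS: "w (Suc n) = w n / m" using z(3) mb by (simp add: w_def m_def g_def c_def abs_mult)
  have "w n / m = w n + eps * w n * (c + r)"
    using mb unfolding r_def m_def g_def by (simp add: field_simps)
  moreover have "0 \<le> r" unfolding r_def using z del eps cp mb by simp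
  moreover have "r \<le> R"
  proof -
    have "del * z \<le> del * B" using z del by (simp add: mult_left_mono)
    moreover have "eps * c * g \<le> eps * Gm^2" using cp mb eps
      by (simp add: power2_eq_square mult_mono mult_left_mono)
    ultimately have "del * z + eps * c * g \<le> R / 2" unfolding R_def by simp
    moreover have "del * z + eps * c * g \<ge> 0" using z del eps cp mb by simp
    ultimately have "(del * z + eps * c * g) / m \<le> (R/2) / (1/2)"
      using mb by (intro frac_le) auto
    then show ?thesis unfolding r_def by simp
  qed
  ultimately show ?thesis using that wS c_def by auto
qed

lemma w_mono_step: "w n \<le> w (Suc n)"
proof -
  obtain r where "0 \<le> r" "r \<le> R" "w (Suc n) = w n + eps * w n * (cw (q (Suc n)) + r)" by (rule wstep)
  then show ?thesis using w_pos[of n] eps cw_pos[of "q (Suc n)"] by simp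
qed

lemma w_lin_step: "w (Suc n) \<ge> w n + eps * w n * cmin"
proof -
  obtain r where "0 \<le> r" "r \<le> R" "w (Suc n) = w n + eps * w n * (cw (q (Suc n)) + r)" by (rule wstep)
  moreover have "eps * w n * cmin \<le> eps * w n * (cw (q (Suc n)) + r)"
    using calculation w_pos[of n] eps cw_ge[of "q (Suc n)"] by (intro mult_left_mono) auto
  ultimately show ?thesis by simp
qed

lemma w_up_step: "w (Suc n) \<le> w n * (1 + 2 * eps * Gm)"
proof -
  obtain z where z: "0 \<le> z" "z \<le> B" "p (Suc n) = - p n * (1 - eps * (cw (q (Suc n)) + del * z))"
    by (rule step)
  define g where "g = cw (q (Suc n)) + del * z"
  define m where "m = 1 - eps * g"
  have mb: "1/2 \<le> m" "m < 1" "g \<le> Gm" using mult_bounds[OF z(1,2), of "q (Suc n)"]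
    unfolding m_def g_def by auto
  have wS: "w (Suc n) = w n / m" using z(3) mb by (simp add: w_def m_def g_def abs_mult)
  have "1 \<le> m * (1 + 2 * eps * Gm)"
  proof -
    have "m * (1 + 2 * eps * Gm) = 1 - eps * g + 2 * eps * Gm * m" by (simp add: m_def algebra_simps)
    moreover have "2 * eps * Gm * m \<ge> eps * Gm" using mb eps Gm_pos by simp
    moreover have "eps * g \<le> eps * Gm" using mb eps by (simp add: mult_left_mono)
    ultimately show ?thesis by linarith
  qed
  then have "w n / m \<le> w n * (1 + 2 * eps * Gm)" using mb w_pos[of n]
    by (simp add: divide_le_eq mult.assoc[symmetric]) (metis mult.commute mult_left_mono mult_1_right less_imp_le mult.left_commute)
  then show ?thesis using wS by simp
qed

lemma w_mono: "m \<le> n \<Longrightarrow> w m \<le> w n"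
  using w_mono_step by (rule lift_Suc_mono_le)

lemma w0: "w 0 = 1 / \<bar>p0\<bar>" by (simp add: w_def p_def S0 cmom_def)
lemma tau0: "tau 0 = 0" by (simp add: tau_def S0 ctime_def)
lemma q0': "q 0 = q0" by (simp add: q_def S0 cpos_def)
lemma p0': "p 0 = p0" by (simp add: p_def S0 cmom_def)

lemma energy_w: "cenergy (S n) = 1 / (2 * (w n)^2)"
  using p_ne[of n] by (simp add: cenergy_def w_def p_def power2_eq_square abs_mult_self_eq flip: abs_mult)

lemma sign_step: "p (Suc n) * p n < 0"
proof -
  obtain z where z: "0 \<le> z" "z \<le> B" "p (Suc n) = - p n * (1 - eps * (cw (q (Suc n)) + del * z))"
    by (rule step)
  have "1 - eps * (cw (q (Suc n)) + del * z) > 0" using mult_bounds[OF z(1,2)] by (meson less_le_trans half_gt_zero zero_less_one)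
  then show ?thesis using z(3) p_ne[of n]
    by (simp add: mult_less_0_iff zero_less_mult_iff) (metis linorder_neqE_linordered_idom mult_neg_pos neg_0_less_iff_less mult_pos_pos zero_less_mult_iff)
qed

lemma tau_step: "tau (Suc n) = tau n + \<bar>q (Suc n) - q n\<bar> * w n"
proof -
  obtain z where "tau (Suc n) = tau n + \<bar>q (Suc n) - q n\<bar> / \<bar>p n\<bar>" by (rule step)
  then show ?thesis by (simp add: w_def)
qed

lemma q_step: "q (Suc n) = next_wall a1 a2 HO (q n) (p n)"
proof -
  obtain z where "q (Suc n) = next_wall a1 a2 HO (q n) (p n)" by (rule step)
  then show ?thesis .
qed

definition "hi n \<longleftrightarrow> (p n)\<^sup>2 / 2 > HO"
definition "wO = 1 / sqrt (2 * HO)"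

lemma wO_pos: "wO > 0" using HO by (simp add: wO_def)

lemma hi_iff: "hi n \<longleftrightarrow> w n < wO"
proof -
  have "hi n \<longleftrightarrow> 2 * HO < (p n)\<^sup>2" unfolding hi_def by linarith
  also have "\<dots> \<longleftrightarrow> sqrt (2 * HO) < \<bar>p n\<bar>"
    using HO by (metis real_sqrt_abs real_sqrt_less_iff)
  also have "\<dots> \<longleftrightarrow> 1 / \<bar>p n\<bar> < 1 / sqrt (2 * HO)"
  proof -
    have "sqrt (2*HO) > 0" "\<bar>p n\<bar> > 0" using HO p_ne[of n] by auto
    then show ?thesis by (simp add: field_simps)
  qed
  finally show ?thesis by (simp add: w_def wO_def)
qed

lemma hi0: "hi 0" using p0 by (simp add: hi_def p0')

lemma w_lin: "w n \<ge> w 0 + real n * eps * w 0 * cmin"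
proof (induction n)
  case 0 then show ?case by simp
next
  case (Suc n)
  have "w (Suc n) \<ge> w n + eps * w n * cmin" by (rule w_lin_step)
  moreover have "eps * w n * cmin \<ge> eps * w 0 * cmin"
    using w_mono[of 0 n] eps cmin_pos by (simp add: mult_right_mono mult_left_mono)
  ultimately show ?case using Suc by (simp add: algebra_simps)
qed

lemma ex_lo: "\<exists>n. \<not> hi n"
proof -
  have pos: "eps * w 0 * cmin > 0" using eps w_pos cmin_pos by simp
  obtain n :: nat where "wO / (eps * w 0 * cmin) < real n" using reals_Archimedean2 by blast
  then have "wO < real n * (eps * w 0 * cmin)" using pos by (simp add: divide_less_eq)
  moreover have "w n \<ge> w 0 + real n * eps * w 0 * cmin" by (rule w_lin)
  ultimately have "w n \<ge> wO" using w_pos[of 0] by (simp add: algebra_simps)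
  then show ?thesis using hi_iff[of n] by auto
qed

definition "N = (LEAST n. \<not> hi n)"

lemma N_lo: "\<not> hi N" unfolding N_def using ex_lo by (rule LeastI_ex)
lemma lt_N_hi: "n < N \<Longrightarrow> hi n" unfolding N_def using not_less_Least by blast
lemma N_pos: "N \<ge> 1" using N_lo hi0 by (cases N) auto
lemma ge_N_lo: "N \<le> n \<Longrightarrow> \<not> hi n" using N_lo w_mono[of N n] hi_iff by auto
lemma hi_iff_N: "hi n \<longleftrightarrow> n < N" using lt_N_hi ge_N_lo by (meson not_less)

lemma inv3: "1 \<le> n \<Longrightarrow> n \<le> N \<Longrightarrow> (q n = a2 \<and> p n < 0) \<or> (q n = -a1 \<and> p n > 0)"
proof (induction n)
  case 0 then show ?case by simp
next
  case (Suc n)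
  have sg: "p (Suc n) * p n < 0" by (rule sign_step)
  have hn: "hi n" using Suc.prems lt_N_hi by simp
  then have hp: "(p n)\<^sup>2 / 2 > HO" by (simp add: hi_def)
  show ?case
  proof (cases "n = 0")
    case True
    then show ?thesis using sg hp q_step[of 0] p_ne[of 0]
      by (auto simp: next_wall_def mult_less_0_iff)
  next
    case False
    then have "(q n = a2 \<and> p n < 0) \<or> (q n = -a1 \<and> p n > 0)" using Suc by simp
    then show ?thesis using sg hp q_step[of n]
      by (auto simp: next_wall_def mult_less_0_iff)
  qed
qed

lemma step3: assumes "1 \<le> n" "n < N"
  shows "q (Suc n) = (if q n = a2 then -a1 else a2)" "\<bar>q (Suc n) - q n\<bar> = a1 + a2"
proof -
  have i: "(q n = a2 \<and> p n < 0) \<or> (q n = -a1 \<and> p n > 0)" using inv3 assms by simp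
  have hp: "(p n)\<^sup>2 / 2 > HO" using lt_N_hi[OF assms(2)] by (simp add: hi_def)
  show "q (Suc n) = (if q n = a2 then -a1 else a2)" using i hp q_step[of n] a1 a2
    by (auto simp: next_wall_def)
  then show "\<bar>q (Suc n) - q n\<bar> = a1 + a2" using i a1 a2 by auto
qed

lemma step0: "\<bar>q 1 - q 0\<bar> \<le> a1 + a2" "q 1 = a2 \<or> q 1 = -a1"
proof -
  have hp: "(p 0)\<^sup>2 / 2 > HO" using hi0 by (simp add: hi_def)
  have "q 1 = a2 \<or> q 1 = -a1" using hp q_step[of 0] by (auto simp: next_wall_def)
  then show "\<bar>q 1 - q 0\<bar> \<le> a1 + a2" using q0 q0' by auto
  show "q 1 = a2 \<or> q 1 = -a1" by fact
qed

definition "wellR \<longleftrightarrow> q N = a2"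

lemma invW: "N \<le> n \<Longrightarrow>
   (if wellR then (q n = a2 \<and> p n < 0) \<or> (q n = 0 \<and> p n > 0)
    else (q n = -a1 \<and> p n > 0) \<or> (q n = 0 \<and> p n < 0))"
proof (induction n)
  case 0 then show ?case using N_pos by simp
next
  case (Suc n)
  show ?case
  proof (cases "N = Suc n")
    case True
    then show ?thesis using inv3[of N] N_pos a1 a2 by (auto simp: wellR_def)
  next
    case False
    then have IH: "(if wellR then (q n = a2 \<and> p n < 0) \<or> (q n = 0 \<and> p n > 0)
      else (q n = -a1 \<and> p n > 0) \<or> (q n = 0 \<and> p n < 0))" using Suc by simp
    have sg: "p (Suc n) * p n < 0" by (rule sign_step)
    have lo: "\<not> (p n)\<^sup>2 / 2 > HO" using ge_N_lo[of n] Suc.prems False by (simp add: hi_def)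
    show ?thesis using IH sg lo q_step[of n] a1 a2
      by (auto simp: next_wall_def mult_less_0_iff split: if_splits)
  qed
qed

lemma stepW: assumes "N \<le> n"
  shows "\<bar>q (Suc n) - q n\<bar> = (if wellR then a2 else a1)"
    "cw (q (Suc (Suc n))) + cw (q (Suc n)) = (if wellR then c2 + c3 else c1 + c3)"
    "\<bar>cw (q (Suc n)) - (if wellR then c2 + c3 else c1 + c3)/2\<bar> = (if wellR then \<bar>c2 - c3\<bar>/2 else \<bar>c1 - c3\<bar>/2)"
proof -
  have A: "\<And>m. N \<le> m \<Longrightarrow> (if wellR then (q m = a2 \<and> p m < 0) \<or> (q m = 0 \<and> p m > 0)
    else (q m = -a1 \<and> p m > 0) \<or> (q m = 0 \<and> p m < 0))" by (rule invW)
  have s1: "\<And>m. N \<le> m \<Longrightarrow> q (Suc m) = (if wellR then (if q m = a2 then 0 else a2) else (if q m = -a1 then 0 else -a1))"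
  proof -
    fix m assume m: "N \<le> m"
    have lo: "\<not> (p m)\<^sup>2 / 2 > HO" using ge_N_lo[OF m] by (simp add: hi_def)
    show "q (Suc m) = (if wellR then (if q m = a2 then 0 else a2) else (if q m = -a1 then 0 else -a1))"
      using A[OF m] lo q_step[of m] a1 a2 by (auto simp: next_wall_def split: if_splits)
  qed
  have an: "a2 \<noteq> 0" "-a1 \<noteq> 0" "a2 \<noteq> -a1" "(0::real) \<noteq> -a1" "(0::real) \<noteq> a2" using a1 a2 by auto
  show "\<bar>q (Suc n) - q n\<bar> = (if wellR then a2 else a1)"
    using A[OF assms] s1[OF assms] a1 a2 by (auto split: if_splits)
  have B: "q (Suc n) \<in> (if wellR then {a2, 0} else {-a1, 0})"
    using A[of "Suc n"] assms by (auto split: if_splits)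
  have "q (Suc (Suc n)) = (if wellR then (if q (Suc n) = a2 then 0 else a2) else (if q (Suc n) = -a1 then 0 else -a1))"
    using s1[of "Suc n"] assms by simp
  then show "cw (q (Suc (Suc n))) + cw (q (Suc n)) = (if wellR then c2 + c3 else c1 + c3)"
    using B an by (auto simp: cw_def split: if_splits)
  have h: "\<bar>c2 - (c2 + c3)/2\<bar> = \<bar>c2 - c3\<bar>/2" "\<bar>c3 - (c2 + c3)/2\<bar> = \<bar>c2 - c3\<bar>/2"
     "\<bar>c1 - (c1 + c3)/2\<bar> = \<bar>c1 - c3\<bar>/2" "\<bar>c3 - (c1 + c3)/2\<bar> = \<bar>c1 - c3\<bar>/2"
    by (auto simp: abs_if field_simps)
  show "\<bar>cw (q (Suc n)) - (if wellR then c2 + c3 else c1 + c3)/2\<bar> = (if wellR then \<bar>c2 - c3\<bar>/2 else \<bar>c1 - c3\<bar>/2)"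
  proof (cases wellR)
    case True
    then have "q (Suc n) = a2 \<or> q (Suc n) = 0" using B by auto
    then show ?thesis using True h an by (auto simp: cw_def)
  next
    case False
    then have "q (Suc n) = -a1 \<or> q (Suc n) = 0" using B by auto
    then show ?thesis using False h an by (auto simp: cw_def)
  qed
qed

end

context bil begin
definition "rr j = (w (Suc j) - w j) / (eps * w j) - cw (q (Suc j))"

lemma rr: "w (Suc j) = w j + eps * w j * (cw (q (Suc j)) + rr j)" "0 \<le> rr j" "rr j \<le> R"
proof -
  obtain r where r: "0 \<le> r" "r \<le> R" "w (Suc j) = w j + eps * w j * (cw (q (Suc j)) + r)" by (rule wstep)
  have "rr j = r" unfolding rr_def r(3) using eps w_pos[of j] by (simp add: field_simps)
  then show "w (Suc j) = w j + eps * w j * (cw (q (Suc j)) + rr j)" "0 \<le> rr j" "rr j \<le> R" using r by auto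
qed

definition "Lm = min a1 a2"
lemma Lm_pos: "Lm > 0" using a1 a2 by (simp add: Lm_def)

lemma len_lo: "1 \<le> j \<Longrightarrow> \<bar>q (Suc j) - q j\<bar> \<ge> Lm"
  using step3(2)[of j] stepW(1)[of j] a1 a2 by (cases "j < N") (auto simp: Lm_def)
lemma len_hi: "\<bar>q (Suc j) - q j\<bar> \<le> a1 + a2"
proof (cases "j = 0")
  case True then show ?thesis using step0 by simp
next
  case False
  then show ?thesis using step3(2)[of j] stepW(1)[of j] a1 a2 by (cases "j < N") auto
qed

lemma tau_mono_step: "tau n \<le> tau (Suc n)" using tau_step[of n] w_pos[of n] by simp
lemma tau_mono: "m \<le> n \<Longrightarrow> tau m \<le> tau n" using tau_mono_step by (rule lift_Suc_mono_le)
lemma tau_nn: "tau n \<ge> 0" using tau_mono[of 0 n] tau0 by simp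

lemma tau_lin: "tau (Suc n) \<ge> real n * Lm * w 0"
proof (induction n)
  case 0 then show ?case using tau_nn by simp
next
  case (Suc n)
  have "tau (Suc (Suc n)) = tau (Suc n) + \<bar>q (Suc (Suc n)) - q (Suc n)\<bar> * w (Suc n)" by (rule tau_step)
  moreover have "\<bar>q (Suc (Suc n)) - q (Suc n)\<bar> * w (Suc n) \<ge> Lm * w 0"
    using len_lo[of "Suc n"] w_mono[of 0 "Suc n"] Lm_pos w_pos[of 0] by (intro mult_mono) auto
  ultimately show ?case using Suc by (simp add: algebra_simps)
qed

lemma w1_bound: "w 1 \<le> w 0 * (1 + 2 * eps * Gm)" "w 1 \<le> 2 * w 0"
proof -
  show a: "w 1 \<le> w 0 * (1 + 2 * eps * Gm)" using w_up_step[of 0] by simp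
  have "1 + 2 * eps * Gm \<le> 2" using small by (simp add: Gm_def)
  then have "w 0 * (1 + 2 * eps * Gm) \<le> w 0 * 2" using w_pos[of 0] by (intro mult_left_mono) auto
  then show "w 1 \<le> 2 * w 0" using a by simp
qed

lemma w_apriori: "1 \<le> n \<Longrightarrow> w n \<le> w 1 + 2 * Gm / Lm * (eps * (tau n - tau 1))"
proof (induction n)
  case 0 then show ?case by simp
next
  case (Suc n)
  show ?case
  proof (cases "n = 0")
    case True then show ?thesis by simp
  next
    case False
    then have IH: "w n \<le> w 1 + 2 * Gm / Lm * (eps * (tau n - tau 1))" using Suc by simp
    have "w (Suc n) - w n \<le> 2 * eps * Gm * w n" using w_up_step[of n] by (simp add: algebra_simps)
    also have "\<dots> \<le> 2 * Gm / Lm * (eps * (tau (Suc n) - tau n))"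
    proof -
      have "tau (Suc n) - tau n \<ge> Lm * w n" using tau_step[of n] len_lo[of n] False w_pos[of n]
        by (simp add: mult_right_mono)
      then have "eps * (tau (Suc n) - tau n) \<ge> eps * (Lm * w n)" using eps by (simp add: mult_left_mono)
      then have "2 * Gm / Lm * (eps * (tau (Suc n) - tau n)) \<ge> 2 * Gm / Lm * (eps * (Lm * w n))"
        by (rule mult_left_mono) (use Gm_pos Lm_pos in auto)
      then show ?thesis using Lm_pos by (simp add: field_simps)
    qed
    finally show ?thesis using IH by (simp add: algebra_simps)
  qed
qed

definition "L3 = a1 + a2"
definition "cb3 = (c1 + c2) / 2"
definition "k3 = cb3 / L3"
definition "D3 = \<bar>c1 - c2\<bar> / 2"

lemma phase3: assumes "1 \<le> n" "n \<le> N"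
  shows "\<bar>w n - w 1 - eps * k3 * (tau n - tau 1)\<bar>
     \<le> eps * (R + eps * D3 * (cb3 + D3 + R) / 2) / L3 * (tau n - tau 1) + eps * D3 * (w n + w 1) / 2"
proof (rule genG2[where c = "\<lambda>j. cw (q (Suc j))" and r = rr])
  show "L3 > 0" using a1 a2 by (simp add: L3_def)
  show "0 \<le> eps" using eps by simp
  show "cb3 = k3 * L3" using a1 a2 by (simp add: k3_def L3_def)
  show "0 \<le> cb3" using c1 c2 by (simp add: cb3_def)
  show "0 \<le> R" by (rule R0)
  show "\<And>j. 1 \<le> j \<Longrightarrow> j < n \<Longrightarrow> tau (Suc j) = tau j + L3 * w j"
    using step3(2) assms tau_step by (simp add: L3_def mult.commute)
  show "\<And>j. 1 \<le> j \<Longrightarrow> j < n \<Longrightarrow> w (Suc j) = w j + eps * w j * (cw (q (Suc j)) + rr j)"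
    using rr(1) by simp
  show "\<And>j. 1 \<le> j \<Longrightarrow> j < n \<Longrightarrow> \<bar>rr j\<bar> \<le> R" using rr(2,3) by simp
  show "\<And>j. 1 \<le> j \<Longrightarrow> Suc j < n \<Longrightarrow> cw (q (Suc (Suc j))) = 2 * cb3 - cw (q (Suc j))"
  proof -
    fix j :: nat assume j: "1 \<le> j" "Suc j < n"
    have i: "q (Suc j) = a2 \<or> q (Suc j) = -a1" using inv3[of "Suc j"] j assms by auto
    have "q (Suc (Suc j)) = (if q (Suc j) = a2 then -a1 else a2)" using step3(1)[of "Suc j"] j assms by simp
    then show "cw (q (Suc (Suc j))) = 2 * cb3 - cw (q (Suc j))" using i a1 a2
      by (auto simp: cw_def cb3_def field_simps)
  qed
  show "1 < n \<Longrightarrow> \<bar>cw (q (Suc 1)) - cb3\<bar> \<le> D3"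
  proof -
    assume "1 < n"
    then have "q 2 = a2 \<or> q 2 = -a1" using inv3[of 2] assms by auto
    then show ?thesis using a1 a2 by (auto simp: cw_def cb3_def D3_def abs_if field_simps numeral_2_eq_2)
  qed
  show "0 \<le> D3" by (simp add: D3_def)
  show "\<And>j. 1 \<le> j \<Longrightarrow> j \<le> n \<Longrightarrow> 0 \<le> w j" using w_pos less_imp_le by blast
  show "1 \<le> n" by fact
qed

definition "LW = (if wellR then a2 else a1)"
definition "cbW = (if wellR then c2 + c3 else c1 + c3) / 2"
definition "kW = cbW / LW"
definition "DW = (if wellR then \<bar>c2 - c3\<bar> / 2 else \<bar>c1 - c3\<bar> / 2)"

lemma phaseW: assumes "N \<le> n"
  shows "\<bar>w n - w N - eps * kW * (tau n - tau N)\<bar>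
     \<le> eps * (R + eps * DW * (cbW + DW + R) / 2) / LW * (tau n - tau N) + eps * DW * (w n + w N) / 2"
proof (rule genG2[where c = "\<lambda>j. cw (q (Suc j))" and r = rr])
  show "LW > 0" using a1 a2 by (simp add: LW_def)
  show "0 \<le> eps" using eps by simp
  show "cbW = kW * LW" using a1 a2 by (simp add: kW_def LW_def)
  show "0 \<le> cbW" using c1 c2 c3 by (simp add: cbW_def)
  show "0 \<le> R" by (rule R0)
  show "\<And>j. N \<le> j \<Longrightarrow> j < n \<Longrightarrow> tau (Suc j) = tau j + LW * w j"
    using stepW(1) tau_step by (simp add: LW_def mult.commute)
  show "\<And>j. N \<le> j \<Longrightarrow> j < n \<Longrightarrow> w (Suc j) = w j + eps * w j * (cw (q (Suc j)) + rr j)"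
    using rr(1) by simp
  show "\<And>j. N \<le> j \<Longrightarrow> j < n \<Longrightarrow> \<bar>rr j\<bar> \<le> R" using rr(2,3) by simp
  show "\<And>j. N \<le> j \<Longrightarrow> Suc j < n \<Longrightarrow> cw (q (Suc (Suc j))) = 2 * cbW - cw (q (Suc j))"
    using stepW(2) by (simp add: cbW_def algebra_simps)
  show "N < n \<Longrightarrow> \<bar>cw (q (Suc N)) - cbW\<bar> \<le> DW"
    using stepW(3)[of N] by (simp add: cbW_def DW_def)
  show "0 \<le> DW" by (simp add: DW_def)
  show "\<And>j. N \<le> j \<Longrightarrow> j \<le> n \<Longrightarrow> 0 \<le> w j" using w_pos less_imp_le by blast
  show "N \<le> n" by fact
qed

definition "w00 = 1 / \<bar>p0\<bar>"
lemma w00: "w 0 = w00" by (simp add: w0 w00_def)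
definition "Wmax T = 2 * w00 + 2 * Gm / Lm * T"
definition "rho3 = R + eps * D3 * (cb3 + D3 + R) / 2"
definition "rhoW = R + eps * DW * (cbW + DW + R) / 2"
definition "E3a T = 2 * eps * Gm * w00 + k3 * eps * (a1 + a2) * w00 + rho3 / L3 * T + eps * D3 * Wmax T"
definition "t0 = (wO - w00) / k3"
definition "EWa T = rhoW / LW * T + eps * DW * Wmax T + 2 * eps * Gm * wO + kW * (E3a T + 2 * eps * Gm * wO) / k3"

lemma k3_pos: "k3 > 0" using a1 a2 c1 c2 by (simp add: k3_def cb3_def L3_def)
lemma w00_lt: "w00 < wO" using hi0 hi_iff w00 by simp
lemma w00_pos: "w00 > 0" using w_pos[of 0] w00 by simp

lemma wbound: assumes "eps * tau n \<le> T" shows "w n \<le> Wmax T"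
proof (cases "n = 0")
  case True
  have "T \<ge> 0" using assms tau_nn[of n] eps by (metis mult_nonneg_nonneg less_imp_le order_trans)
  then show ?thesis using True w00 Gm_pos Lm_pos by (simp add: Wmax_def w00_pos less_imp_le)
next
  case False
  then have "w n \<le> w 1 + 2 * Gm / Lm * (eps * (tau n - tau 1))" using w_apriori by simp
  moreover have "eps * (tau n - tau 1) \<le> T"
  proof -
    have "eps * tau 1 \<ge> 0" using eps tau_nn[of 1] by simp
    then show ?thesis using assms by (simp add: algebra_simps)
  qed
  moreover have "2 * Gm / Lm \<ge> 0" using Gm_pos Lm_pos by simp
  ultimately have "w n \<le> w 1 + 2 * Gm / Lm * T" by (meson add_left_mono mult_left_mono order_trans)
  then show ?thesis using w1_bound(2) w00 by (simp add: Wmax_def)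
qed

lemma P3: assumes "n \<le> N" "eps * tau n \<le> T"
  shows "\<bar>w n - w00 - k3 * (eps * tau n)\<bar> \<le> E3a T"
proof -
  have T0: "T \<ge> 0" using assms tau_nn[of n] eps by (metis mult_nonneg_nonneg less_imp_le order_trans)
  have R0': "R \<ge> 0" by (rule R0)
  have rho3: "rho3 \<ge> 0" using R0' eps c1 c2 by (simp add: rho3_def D3_def cb3_def)
  have L3: "L3 > 0" using a1 a2 by (simp add: L3_def)
  have E0: "E3a T \<ge> 0" unfolding E3a_def using eps Gm_pos w00_pos k3_pos a1 a2 rho3 L3 T0 Lm_pos
    by (intro add_nonneg_nonneg mult_nonneg_nonneg divide_nonneg_pos)
       (auto simp: D3_def Wmax_def intro!: add_nonneg_nonneg mult_nonneg_nonneg divide_nonneg_pos less_imp_le[OF Lm_pos] less_imp_le[OF Gm_pos])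
  show ?thesis
  proof (cases "n = 0")
    case True then show ?thesis using E0 tau0 w00 by simp
  next
    case False
    then have n1: "1 \<le> n" by simp
    have ph: "\<bar>w n - w 1 - eps * k3 * (tau n - tau 1)\<bar>
     \<le> eps * rho3 / L3 * (tau n - tau 1) + eps * D3 * (w n + w 1) / 2"
      using phase3[OF n1 assms(1)] by (simp add: rho3_def)
    have t1: "tau 1 \<ge> 0" using tau_nn by simp
    have X: "eps * (tau n - tau 1) \<le> T"
    proof -
      have "eps * tau 1 \<ge> 0" using eps t1 by simp
      then show ?thesis using assms by (simp add: algebra_simps)
    qed
    have X0: "eps * (tau n - tau 1) \<ge> 0" using tau_mono[OF n1] eps by simp
    have a: "eps * rho3 / L3 * (tau n - tau 1) \<le> rho3 / L3 * T"
    proof -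
      have "eps * rho3 / L3 * (tau n - tau 1) = rho3 / L3 * (eps * (tau n - tau 1))" by simp
      also have "\<dots> \<le> rho3 / L3 * T" using X rho3 L3 by (intro mult_left_mono) auto
      finally show ?thesis .
    qed
    have wn: "w n \<le> Wmax T" using wbound assms by blast
    have w1: "w 1 \<le> Wmax T"
    proof -
      have "2 * Gm * T / Lm \<ge> 0" using Gm_pos Lm_pos T0 by simp
      then show ?thesis using w1_bound(2) w00 by (simp add: Wmax_def)
    qed
    have b: "eps * D3 * (w n + w 1) / 2 \<le> eps * D3 * Wmax T"
    proof -
      have "w n + w 1 \<le> 2 * Wmax T" using wn w1 by simp
      then have "eps * D3 * (w n + w 1) \<le> eps * D3 * (2 * Wmax T)" using eps
        by (intro mult_left_mono) (auto simp: D3_def)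
      then show ?thesis by simp
    qed
    have c: "\<bar>w 1 - w00\<bar> \<le> 2 * eps * Gm * w00" using w1_bound(1) w_mono[of 0 1] w00 by (simp add: algebra_simps)
    have d: "eps * tau 1 \<le> eps * (a1 + a2) * w00"
    proof -
      have "tau 1 = \<bar>q 1 - q 0\<bar> * w 0" using tau_step[of 0] tau0 by simp
      also have "\<dots> \<le> (a1 + a2) * w00" using step0(1) w00 w00_pos by (simp add: mult_right_mono)
      finally show ?thesis using eps by (simp add: mult_left_mono mult.assoc)
    qed
    have "w n - w00 - k3 * (eps * tau n) = (w n - w 1 - eps * k3 * (tau n - tau 1)) + (w 1 - w00) - k3 * (eps * tau 1)"
      by (simp add: algebra_simps)
    moreover have "k3 * (eps * tau 1) \<le> k3 * eps * (a1 + a2) * w00" using d k3_pos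
      by (metis mult.assoc mult_le_cancel_left_pos)
    moreover have "k3 * (eps * tau 1) \<ge> 0" using k3_pos eps t1 by simp
    ultimately show ?thesis using ph a b c unfolding E3a_def by (simp add: abs_le_iff)
  qed
qed

lemma abs3: "\<bar>(x::real) + y + z\<bar> \<le> \<bar>x\<bar> + \<bar>y\<bar> + \<bar>z\<bar>" by linarith

lemma wN: "wO \<le> w N" "w N \<le> wO * (1 + 2 * eps * Gm)"
proof -
  show "wO \<le> w N" using N_lo hi_iff by simp
  obtain m where m: "N = Suc m" using N_pos by (cases N) auto
  have "w m < wO" using hi_iff lt_N_hi[of m] m by simp
  then have "w m * (1 + 2 * eps * Gm) \<le> wO * (1 + 2 * eps * Gm)" using eps Gm_pos
    by (intro mult_right_mono) auto
  then show "w N \<le> wO * (1 + 2 * eps * Gm)" using w_up_step[of m] m by simp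
qed

lemma XN: assumes "N \<le> n" "eps * tau n \<le> T"
  shows "k3 * \<bar>eps * tau N - t0\<bar> \<le> E3a T + 2 * eps * Gm * wO"
proof -
  have XT: "eps * tau N \<le> T"
  proof -
    have "eps * tau N \<le> eps * tau n" using tau_mono[OF assms(1)] eps by (simp add: mult_left_mono)
    then show ?thesis using assms(2) by linarith
  qed
  have p: "\<bar>w N - w00 - k3 * (eps * tau N)\<bar> \<le> E3a T" using P3[OF _ XT] by simp
  have kt: "k3 * t0 = wO - w00" using k3_pos by (simp add: t0_def)
  have "k3 * \<bar>eps * tau N - t0\<bar> = \<bar>k3 * (eps * tau N - t0)\<bar>" using k3_pos
    by (simp add: abs_mult)
  also have "\<dots> = \<bar>k3 * (eps * tau N) - k3 * t0\<bar>" by (simp add: right_diff_distrib)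
  also have "\<dots> = \<bar>(w N - wO) - (w N - w00 - k3 * (eps * tau N))\<bar>" using kt by (simp add: algebra_simps)
  also have "\<dots> \<le> \<bar>w N - wO\<bar> + \<bar>w N - w00 - k3 * (eps * tau N)\<bar>" by (rule abs_triangle_ineq4)
  also have "\<dots> \<le> \<bar>w N - wO\<bar> + E3a T" using p by simp
  also have "\<bar>w N - wO\<bar> \<le> 2 * eps * Gm * wO" using wN by (simp add: algebra_simps)
  finally show ?thesis by simp
qed

lemma PW: assumes "N \<le> n" "eps * tau n \<le> T"
  shows "\<bar>w n - wO - kW * (eps * tau n - t0)\<bar> \<le> EWa T"
proof -
  have T0: "T \<ge> 0" using assms tau_nn[of n] eps by (metis mult_nonneg_nonneg less_imp_le order_trans)
  have R0': "R \<ge> 0" by (rule R0)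
  have rhoW: "rhoW \<ge> 0" using R0' eps c1 c2 c3 by (simp add: rhoW_def DW_def cbW_def)
  have LW: "LW > 0" using a1 a2 by (simp add: LW_def)
  have kW: "kW > 0" using a1 a2 c1 c2 c3 by (simp add: kW_def cbW_def LW_def)
  have ph: "\<bar>w n - w N - eps * kW * (tau n - tau N)\<bar>
     \<le> eps * rhoW / LW * (tau n - tau N) + eps * DW * (w n + w N) / 2"
    using phaseW[OF assms(1)] by (simp add: rhoW_def)
  have XT: "eps * tau N \<le> T"
  proof -
    have "eps * tau N \<le> eps * tau n" using tau_mono[OF assms(1)] eps by (simp add: mult_left_mono)
    then show ?thesis using assms(2) by linarith
  qed
  have X: "eps * (tau n - tau N) \<le> T"
  proof -
    have "eps * tau N \<ge> 0" using eps tau_nn[of N] by simp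
    then show ?thesis using assms by (simp add: algebra_simps)
  qed
  have a: "eps * rhoW / LW * (tau n - tau N) \<le> rhoW / LW * T"
  proof -
    have "eps * rhoW / LW * (tau n - tau N) = rhoW / LW * (eps * (tau n - tau N))" by simp
    also have "\<dots> \<le> rhoW / LW * T" using X rhoW LW by (intro mult_left_mono) auto
    finally show ?thesis .
  qed
  have b: "eps * DW * (w n + w N) / 2 \<le> eps * DW * Wmax T"
  proof -
    have "w n + w N \<le> 2 * Wmax T" using wbound[OF assms(2)] wbound[OF XT] by simp
    then have "eps * DW * (w n + w N) \<le> eps * DW * (2 * Wmax T)" using eps
      by (intro mult_left_mono) (auto simp: DW_def)
    then show ?thesis by simp
  qed
  have c: "\<bar>w N - wO\<bar> \<le> 2 * eps * Gm * wO" using wN by (simp add: algebra_simps)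
  have d: "kW * \<bar>eps * tau N - t0\<bar> \<le> kW * (E3a T + 2 * eps * Gm * wO) / k3"
  proof -
    have "kW * (k3 * \<bar>eps * tau N - t0\<bar>) \<le> kW * (E3a T + 2 * eps * Gm * wO)"
      using XN[OF assms] kW by (intro mult_left_mono) auto
    then show ?thesis using k3_pos by (simp add: field_simps)
  qed
  have e1: "w n - wO - kW * (eps * tau n - t0) = (w n - w N - eps * kW * (tau n - tau N)) + (w N - wO) + kW * (t0 - eps * tau N)"
    by (simp add: algebra_simps)
  have e2: "\<bar>kW * (t0 - eps * tau N)\<bar> = kW * \<bar>eps * tau N - t0\<bar>" using kW by (simp add: abs_mult abs_of_pos abs_minus_commute)
  have "\<bar>w n - wO - kW * (eps * tau n - t0)\<bar> = \<bar>(w n - w N - eps * kW * (tau n - tau N)) + (w N - wO) + kW * (t0 - eps * tau N)\<bar>"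
    by (simp only: e1)
  also have "\<dots> \<le> \<bar>w n - w N - eps * kW * (tau n - tau N)\<bar> + \<bar>w N - wO\<bar> + \<bar>kW * (t0 - eps * tau N)\<bar>" by (rule abs3)
  also have "\<dots> = \<bar>w n - w N - eps * kW * (tau n - tau N)\<bar> + \<bar>w N - wO\<bar> + kW * \<bar>eps * tau N - t0\<bar>" using e2 by simp
  finally have "\<bar>w n - wO - kW * (eps * tau n - t0)\<bar> \<le> \<bar>w n - w N - eps * kW * (tau n - tau N)\<bar> + \<bar>w N - wO\<bar> + kW * \<bar>eps * tau N - t0\<bar>" .
  then show ?thesis using ph a b c d unfolding EWa_def by linarith
qed

end

context bil begin

definition "Kc = Gm / Lm"
definition "rhoc = (2 * B + 2 * Gm^2) + Gm * (3 * Gm + 2 * B) / 2"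
definition "E3c T = 2 * Gm * w00 + Kc * (a1 + a2) * w00 + rhoc * T / Lm + Gm * Wmax T"
definition "C3 T = E3c T + 2 * Gm * wO + 2 * Gm * Wmax T + Kc * (a1 + a2) * Wmax T"
definition "CW T = rhoc * T / Lm + Gm * Wmax T + 2 * Gm * wO + Kc * (E3c T + 2 * Gm * wO) / k3
   + Kc * (a1 + a2) * Wmax T + 2 * Gm * Wmax T"

lemma Kc_pos: "Kc > 0" using Gm_pos Lm_pos by (simp add: Kc_def)
lemma k3_le: "k3 \<le> Kc"
proof -
  have "cb3 \<le> Gm" using c1 c2 c3 B0 by (simp add: cb3_def Gm_def)
  moreover have "Lm \<le> L3" using a1 a2 by (simp add: Lm_def L3_def)
  ultimately show ?thesis unfolding k3_def Kc_def using Lm_pos c1 c2 Gm_pos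
    by (intro frac_le) auto
qed
lemma kW_le: "kW \<le> Kc"
proof -
  have "cbW \<le> Gm" using c1 c2 c3 B0 by (simp add: cbW_def Gm_def)
  moreover have "Lm \<le> LW" using a1 a2 by (simp add: Lm_def LW_def)
  ultimately show ?thesis unfolding kW_def Kc_def using Lm_pos c1 c2 c3 Gm_pos
    by (intro frac_le) auto
qed
lemma kW_pos: "kW > 0" using a1 a2 c1 c2 c3 by (simp add: kW_def cbW_def LW_def)
lemma D3_le: "D3 \<le> Gm" "0 \<le> D3" using c1 c2 c3 B0 by (auto simp: D3_def Gm_def)
lemma DW_le: "DW \<le> Gm" "0 \<le> DW" using c1 c2 c3 B0 by (auto simp: DW_def Gm_def)
lemma cb3_le: "cb3 \<le> Gm" "0 \<le> cb3" using c1 c2 c3 B0 by (auto simp: cb3_def Gm_def)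
lemma cbW_le: "cbW \<le> Gm" "0 \<le> cbW" using c1 c2 c3 B0 by (auto simp: cbW_def Gm_def)

lemma R_le: "R \<le> (eps + del) * (2 * B + 2 * Gm^2)" "R \<le> 2 * B + Gm"
proof -
  show "R \<le> (eps + del) * (2 * B + 2 * Gm^2)" unfolding R_def using eps del B0 Gm_pos
    by (simp add: algebra_simps mult_left_mono mult_right_mono)
  have "del * B \<le> B" using mult_right_mono[OF del1 B0] by simp
  moreover have "eps * Gm^2 \<le> Gm / 2" using small Gm_pos unfolding Gm_def[symmetric]
    by (simp add: power2_eq_square mult.assoc[symmetric])
  ultimately show "R \<le> 2 * B + Gm" unfolding R_def by simp
qed

lemma rho_gen:
  assumes D: "0 \<le> D" "D \<le> Gm" and cb: "0 \<le> cb" "cb \<le> Gm"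
  shows "R + eps * D * (cb + D + R) / 2 \<le> (eps + del) * rhoc"
proof -
  have "cb + D + R \<le> 3 * Gm + 2 * B" using D cb R_le(2) by simp
  moreover have "cb + D + R \<ge> 0" using D cb R0 by simp
  ultimately have "D * (cb + D + R) \<le> Gm * (3 * Gm + 2 * B)" using D by (intro mult_mono) auto
  then have "eps * (D * (cb + D + R)) \<le> eps * (Gm * (3 * Gm + 2 * B))"
    using eps by (simp add: mult_left_mono)
  then have "eps * (D * (cb + D + R)) / 2 \<le> eps * (Gm * (3 * Gm + 2 * B)) / 2"
    by (rule divide_right_mono) simp
  moreover have "eps * D * (cb + D + R) / 2 = eps * (D * (cb + D + R)) / 2" by (simp only: mult.assoc)
  moreover have "eps * (Gm * (3 * Gm + 2 * B)) / 2 = eps * (Gm * (3 * Gm + 2 * B) / 2)" by simp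
  ultimately have "eps * D * (cb + D + R) / 2 \<le> eps * (Gm * (3 * Gm + 2 * B) / 2)" by linarith
  also have "\<dots> \<le> (eps + del) * (Gm * (3 * Gm + 2 * B) / 2)"
    using del Gm_pos B0 by (intro mult_right_mono) auto
  finally have "R + eps * D * (cb + D + R) / 2 \<le> (eps + del) * (2 * B + 2 * Gm^2) + (eps + del) * (Gm * (3 * Gm + 2 * B) / 2)"
    using R_le(1) by linarith
  also have "\<dots> = (eps + del) * rhoc" unfolding rhoc_def by (simp only: distrib_left)
  finally show ?thesis .
qed

lemma eZ: "0 \<le> c \<Longrightarrow> eps * c \<le> (eps + del) * c" using del by (simp add: mult_right_mono)

lemma rhoL: assumes "0 \<le> T" "rh \<le> (eps + del) * rhoc" "0 \<le> rh" "Lm \<le> L"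
  shows "rh / L * T \<le> (eps + del) * (rhoc * T / Lm)"
proof -
  have "rh / L \<le> rh / Lm" using assms Lm_pos by (simp add: frac_le)
  also have "\<dots> \<le> (eps + del) * rhoc / Lm" using assms Lm_pos by (simp add: divide_right_mono)
  finally have "rh / L * T \<le> (eps + del) * rhoc / Lm * T" using assms by (intro mult_right_mono) auto
  also have "\<dots> = (eps + del) * (rhoc * T / Lm)" by simp
  finally show ?thesis .
qed

lemma Wmax_nn: "0 \<le> T \<Longrightarrow> 0 \<le> Wmax T" using w00_pos Gm_pos Lm_pos by (simp add: Wmax_def)

lemma E3a_le: assumes "0 \<le> T" shows "E3a T \<le> (eps + del) * E3c T"
proof -
  have a: "2 * eps * Gm * w00 \<le> (eps + del) * (2 * Gm * w00)" using eZ[of "2 * Gm * w00"] Gm_pos w00_pos by (simp add: mult.assoc mult.left_commute)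
  have b: "k3 * eps * (a1 + a2) * w00 \<le> (eps + del) * (Kc * (a1 + a2) * w00)"
  proof -
    have "k3 * eps * (a1 + a2) * w00 = eps * (k3 * (a1 + a2) * w00)" by simp
    also have "\<dots> \<le> eps * (Kc * (a1 + a2) * w00)" using k3_le eps a1 a2 w00_pos
      by (intro mult_left_mono mult_right_mono) auto
    also have "\<dots> \<le> (eps + del) * (Kc * (a1 + a2) * w00)" using Kc_pos a1 a2 w00_pos by (intro eZ) simp
    finally show ?thesis .
  qed
  have c: "rho3 / L3 * T \<le> (eps + del) * (rhoc * T / Lm)"
    using rhoL[OF assms rho_gen[OF D3_le(2,1) cb3_le(2,1)]] R0 eps D3_le cb3_le a1 a2
    by (simp add: rho3_def L3_def Lm_def)
  have d: "eps * D3 * Wmax T \<le> (eps + del) * (Gm * Wmax T)"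
  proof -
    have "eps * D3 * Wmax T = eps * (D3 * Wmax T)" by simp
    also have "\<dots> \<le> eps * (Gm * Wmax T)" using D3_le Wmax_nn[OF assms] eps by (intro mult_left_mono mult_right_mono) auto
    also have "\<dots> \<le> (eps + del) * (Gm * Wmax T)" using Gm_pos Wmax_nn[OF assms] by (intro eZ) simp
    finally show ?thesis .
  qed
  show ?thesis using a b c d unfolding E3a_def E3c_def by (simp add: distrib_left)
qed

lemma err3: assumes "0 \<le> T"
  shows "E3a T + 2 * eps * Gm * wO + 2 * eps * Gm * Wmax T + k3 * eps * (a1 + a2) * Wmax T \<le> (eps + del) * C3 T"
proof -
  have a: "2 * eps * Gm * wO \<le> (eps + del) * (2 * Gm * wO)" using eZ[of "2 * Gm * wO"] Gm_pos wO_pos by (simp add: mult.assoc mult.left_commute)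
  have b: "2 * eps * Gm * Wmax T \<le> (eps + del) * (2 * Gm * Wmax T)" using eZ[of "2 * Gm * Wmax T"] Gm_pos Wmax_nn[OF assms] by (simp add: mult.assoc mult.left_commute)
  have c: "k3 * eps * (a1 + a2) * Wmax T \<le> (eps + del) * (Kc * (a1 + a2) * Wmax T)"
  proof -
    have "k3 * eps * (a1 + a2) * Wmax T = eps * (k3 * (a1 + a2) * Wmax T)" by simp
    also have "\<dots> \<le> eps * (Kc * (a1 + a2) * Wmax T)" using k3_le eps a1 a2 Wmax_nn[OF assms]
      by (intro mult_left_mono mult_right_mono) auto
    also have "\<dots> \<le> (eps + del) * (Kc * (a1 + a2) * Wmax T)" using Kc_pos a1 a2 Wmax_nn[OF assms] by (intro eZ) simp
    finally show ?thesis .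
  qed
  show ?thesis using a b c E3a_le[OF assms] unfolding C3_def by (simp add: distrib_left)
qed

lemma errW: assumes "0 \<le> T"
  shows "EWa T + kW * eps * (a1 + a2) * Wmax T + 2 * eps * Gm * Wmax T \<le> (eps + del) * CW T"
proof -
  have a: "2 * eps * Gm * wO \<le> (eps + del) * (2 * Gm * wO)" using eZ[of "2 * Gm * wO"] Gm_pos wO_pos by (simp add: mult.assoc mult.left_commute)
  have b: "2 * eps * Gm * Wmax T \<le> (eps + del) * (2 * Gm * Wmax T)" using eZ[of "2 * Gm * Wmax T"] Gm_pos Wmax_nn[OF assms] by (simp add: mult.assoc mult.left_commute)
  have c: "kW * eps * (a1 + a2) * Wmax T \<le> (eps + del) * (Kc * (a1 + a2) * Wmax T)"
  proof -
    have "kW * eps * (a1 + a2) * Wmax T = eps * (kW * (a1 + a2) * Wmax T)" by simp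
    also have "\<dots> \<le> eps * (Kc * (a1 + a2) * Wmax T)" using kW_le eps a1 a2 Wmax_nn[OF assms]
      by (intro mult_left_mono mult_right_mono) auto
    also have "\<dots> \<le> (eps + del) * (Kc * (a1 + a2) * Wmax T)" using Kc_pos a1 a2 Wmax_nn[OF assms] by (intro eZ) simp
    finally show ?thesis .
  qed
  have d: "rhoW / LW * T \<le> (eps + del) * (rhoc * T / Lm)"
    using rhoL[OF assms rho_gen[OF DW_le(2,1) cbW_le(2,1)]] R0 eps DW_le cbW_le a1 a2
    by (simp add: rhoW_def LW_def Lm_def)
  have e: "eps * DW * Wmax T \<le> (eps + del) * (Gm * Wmax T)"
  proof -
    have "eps * DW * Wmax T = eps * (DW * Wmax T)" by simp
    also have "\<dots> \<le> eps * (Gm * Wmax T)" using DW_le Wmax_nn[OF assms] eps by (intro mult_left_mono mult_right_mono) auto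
    also have "\<dots> \<le> (eps + del) * (Gm * Wmax T)" using Gm_pos Wmax_nn[OF assms] by (intro eZ) simp
    finally show ?thesis .
  qed
  have f: "kW * (E3a T + 2 * eps * Gm * wO) / k3 \<le> (eps + del) * (Kc * (E3c T + 2 * Gm * wO) / k3)"
  proof -
    have "E3a T + 2 * eps * Gm * wO \<le> (eps + del) * (E3c T + 2 * Gm * wO)"
      using E3a_le[OF assms] a by (simp add: distrib_left)
    moreover have "E3a T + 2 * eps * Gm * wO \<ge> 0"
    proof -
      have "E3a T \<ge> 0" unfolding E3a_def using eps Gm_pos w00_pos k3_pos a1 a2 assms Lm_pos
          R0 D3_le cb3_le Wmax_nn[OF assms]
        by (intro add_nonneg_nonneg mult_nonneg_nonneg divide_nonneg_pos)
           (auto simp: rho3_def L3_def intro!: add_nonneg_nonneg mult_nonneg_nonneg divide_nonneg_pos)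
      then show ?thesis using eps Gm_pos wO_pos by simp
    qed
    ultimately have "kW * (E3a T + 2 * eps * Gm * wO) \<le> Kc * ((eps + del) * (E3c T + 2 * Gm * wO))"
      using kW_le kW_pos by (intro mult_mono) auto
    then have "kW * (E3a T + 2 * eps * Gm * wO) / k3 \<le> Kc * ((eps + del) * (E3c T + 2 * Gm * wO)) / k3"
      using k3_pos by (intro divide_right_mono) auto
    also have "\<dots> = (eps + del) * (Kc * (E3c T + 2 * Gm * wO) / k3)" by (simp add: mult_ac)
    finally show ?thesis .
  qed
  show ?thesis using a b c d e f unfolding EWa_def CW_def by (simp add: distrib_left)
qed

end

lemma interp_bound:
  fixes a b h th :: real
  assumes "0 \<le> th" "th \<le> 1" "\<bar>a - h\<bar> \<le> e" "\<bar>b - h\<bar> \<le> e"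
  shows "\<bar>a + (b - a) * th - h\<bar> \<le> e"
proof -
  have "a + (b - a) * th - h = (1 - th) * (a - h) + th * (b - h)" by (simp add: algebra_simps)
  also have "\<bar>\<dots>\<bar> \<le> (1 - th) * \<bar>a - h\<bar> + th * \<bar>b - h\<bar>"
    using assms by (simp add: abs_triangle_ineq abs_mult order_trans[OF abs_triangle_ineq])
  also have "\<dots> \<le> (1 - th) * e + th * e"
    using assms by (intro add_mono mult_left_mono) auto
  finally show ?thesis by (simp add: algebra_simps)
qed

lemma energy_lip:
  fixes a b w :: real
  assumes w: "w > 0" and a: "a \<ge> w" and b: "b \<ge> w"
  shows "\<bar>1 / (2 * a^2) - 1 / (2 * b^2)\<bar> \<le> \<bar>a - b\<bar> / w^3"
proof -
  have ap: "a > 0" and bp: "b > 0" using w a b by auto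
  have eq: "1 / (2 * a^2) - 1 / (2 * b^2) = (b - a) * (1 / (2 * a * b^2) + 1 / (2 * a^2 * b))"
    using ap bp by (simp add: field_simps power2_eq_square)
  have "1 / (2 * a * b^2) \<le> 1 / (2 * w^3)"
  proof -
    have "w * w \<le> b * b" using w a b by (intro mult_mono) auto
    then have "w * (w * w) \<le> a * (b * b)" using w a b by (intro mult_mono) auto
    then have "w^3 \<le> a * b^2" by (simp add: power3_eq_cube power2_eq_square mult.assoc)
    then show ?thesis using w ap bp by (simp add: frac_le)
  qed
  moreover have "1 / (2 * a^2 * b) \<le> 1 / (2 * w^3)"
  proof -
    have "w * w \<le> a * a" using w a b by (intro mult_mono) auto
    then have "(w * w) * w \<le> (a * a) * b" using w a b by (intro mult_mono) auto
    then have "w^3 \<le> a^2 * b" by (simp add: power3_eq_cube power2_eq_square mult.assoc)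
    then show ?thesis using w ap bp by (simp add: frac_le)
  qed
  ultimately have s: "1 / (2 * a * b^2) + 1 / (2 * a^2 * b) \<le> 1 / w^3" by simp
  have s0: "0 \<le> 1 / (2 * a * b^2) + 1 / (2 * a^2 * b)" using ap bp by simp
  have "\<bar>1 / (2 * a^2) - 1 / (2 * b^2)\<bar> = \<bar>b - a\<bar> * (1 / (2 * a * b^2) + 1 / (2 * a^2 * b))"
    using eq s0 by (simp add: abs_mult)
  also have "\<dots> \<le> \<bar>b - a\<bar> * (1 / w^3)" using mult_left_mono[OF s, of "\<bar>b - a\<bar>"] by simp
  finally show ?thesis by (simp add: abs_minus_commute)
qed

context bil begin

lemma C3_nn: "0 \<le> T \<Longrightarrow> 0 \<le> C3 T"
  unfolding C3_def E3c_def using Gm_pos w00_pos Kc_pos a1 a2 Lm_pos wO_pos Wmax_nn[of T] B0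
  by (simp add: rhoc_def)
lemma CW_nn: "0 \<le> T \<Longrightarrow> 0 \<le> CW T"
  unfolding CW_def E3c_def using Gm_pos w00_pos Kc_pos a1 a2 Lm_pos wO_pos Wmax_nn[of T] B0 k3_pos
  by (simp add: rhoc_def)

lemma sqrt2_w00: "1 / sqrt (p0\<^sup>2 / 2) = sqrt 2 * w00"
proof -
  have "sqrt (p0\<^sup>2 / 2) = \<bar>p0\<bar> / sqrt 2" by (simp add: real_sqrt_divide)
  then show ?thesis by (simp add: w00_def)
qed
lemma sqrt2_wO: "1 / sqrt HO = sqrt 2 * wO"
  using HO by (simp add: wO_def real_sqrt_mult)

lemma wO_sq: "1 / (2 * wO^2) = HO"
  using HO by (simp add: wO_def power_divide)

lemma t0_eq: "t0_time a1 a2 c1 c2 HO (p0\<^sup>2 / 2) = t0"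
proof -
  have "t0_time a1 a2 c1 c2 HO (p0\<^sup>2 / 2) = sqrt 2 * (a1 + a2) * (sqrt 2 * wO - sqrt 2 * w00) / (c1 + c2)"
    by (simp add: t0_time_def sqrt2_w00 sqrt2_wO)
  also have "\<dots> = 2 * (a1 + a2) * (wO - w00) / (c1 + c2)"
    by (simp add: algebra_simps)
  also have "\<dots> = t0" unfolding t0_def k3_def cb3_def L3_def using a1 a2 c1 c2 by (simp add: field_simps)
  finally show ?thesis .
qed

lemma s2: "sqrt 2 * sqrt 2 = (2::real)" "sqrt (2::real) > 0" by auto
lemma div_sqrt2: "(x::real) / sqrt 2 = sqrt 2 * x / 2"
proof -
  have "sqrt 2 * sqrt 2 = (2::real)" by simp
  then show ?thesis by (metis divide_divide_eq_right mult.commute nonzero_mult_div_cancel_left real_sqrt_eq_zero_cancel_iff zero_neq_numeral times_divide_eq_left)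
qed

lemma sq_sqrt2: "1 / (sqrt 2 * (y::real))\<^sup>2 = 1 / (2 * y^2)"
  by (simp add: power_mult_distrib)

lemma Hlim3_eq: "Hlim3 a1 a2 c1 c2 (p0\<^sup>2 / 2) t = 1 / (2 * (w00 + k3 * t)^2)"
proof -
  have "t / sqrt 2 * ((c1 + c2) / (a1 + a2)) + 1 / sqrt (p0\<^sup>2 / 2) = sqrt 2 * (w00 + k3 * t)"
    unfolding sqrt2_w00 k3_def cb3_def L3_def using a1 a2
    unfolding div_sqrt2 by (simp add: field_simps)
  then show ?thesis unfolding Hlim3_def sq_sqrt2[symmetric] by simp
qed

lemma Hlim1_eq: "\<not> wellR \<Longrightarrow> Hlim1 a1 c1 c3 HO t0 t = 1 / (2 * (wO + kW * (t - t0))^2)"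
proof -
  assume nw: "\<not> wellR"
  have "(t - t0) / sqrt 2 * ((c1 + c3) / a1) + 1 / sqrt HO = sqrt 2 * (wO + kW * (t - t0))"
    unfolding sqrt2_wO kW_def cbW_def LW_def using a1 nw
    unfolding div_sqrt2 by (simp add: field_simps)
  then show ?thesis unfolding Hlim1_def sq_sqrt2[symmetric] by simp
qed

lemma Hlim2_eq: "wellR \<Longrightarrow> Hlim2 a2 c2 c3 HO t0 t = 1 / (2 * (wO + kW * (t - t0))^2)"
proof -
  assume nw: "wellR"
  have "(t - t0) / sqrt 2 * ((c2 + c3) / a2) + 1 / sqrt HO = sqrt 2 * (wO + kW * (t - t0))"
    unfolding sqrt2_wO kW_def cbW_def LW_def using a2 nw
    unfolding div_sqrt2 by (simp add: field_simps)
  then show ?thesis unfolding Hlim2_def sq_sqrt2[symmetric] by simp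
qed

lemma edge3: "n < N \<Longrightarrow> cedge HO (S n) = 3"
  using lt_N_hi[of n] by (simp add: cedge_def hi_def cenergy_def p_def)

lemma edgeW: "N \<le> n \<Longrightarrow> cedge HO (S n) = (if wellR then 2 else 1)"
proof -
  assume a: "N \<le> n"
  have lo: "\<not> cenergy (S n) > HO" using ge_N_lo[OF a] by (simp add: hi_def cenergy_def p_def)
  show ?thesis using invW[OF a] lo a1 a2 by (auto simp: cedge_def q_def p_def split: if_splits)
qed

lemma det_main:
  fixes t T kap :: real
  assumes t: "0 < t" "t < T" and kap: "kap > 0"
    and Z1: "(eps + del) * (C3 T + CW T) \<le> kap * w00^3"
    and Z2: "t \<noteq> t0 \<Longrightarrow> (eps + del) * (C3 T + CW T) < k3 * \<bar>t - t0\<bar>"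
  shows "let t0' = t0_time a1 a2 c1 c2 HO (p0\<^sup>2 / 2);
             Hh = Hhat a1 a2 HO c1 c2 c3 eps del eta xi zeta q0 p0 t;
             ed = edge_at a1 a2 HO c1 c2 c3 eps del eta xi zeta q0 p0 t
         in (t < t0' \<longrightarrow> ed = 3 \<and> \<bar>Hh - Hlim3 a1 a2 c1 c2 (p0\<^sup>2 / 2) t\<bar> \<le> kap) \<and>
            (t = t0' \<longrightarrow> \<bar>Hh - HO\<bar> \<le> kap) \<and>
            (t0' < t \<longrightarrow> (ed = 1 \<and> \<bar>Hh - Hlim1 a1 c1 c3 HO t0' t\<bar> \<le> kap) \<or>
                        (ed = 2 \<and> \<bar>Hh - Hlim2 a2 c2 c3 HO t0' t\<bar> \<le> kap))"
proof -
  have T0: "0 \<le> T" using t by simp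
  define Z where "Z = eps + del"
  have Zp: "Z > 0" using eps del by (simp add: Z_def)
  define u where "u = t / eps"
  have u0: "u > 0" using t eps by (simp add: u_def)
  have ex: "\<exists>m. u < tau (Suc m)"
  proof -
    have pos: "Lm * w 0 > 0" using Lm_pos w_pos by simp
    obtain m :: nat where "u / (Lm * w 0) < real m" using reals_Archimedean2 by blast
    then have "u < real m * (Lm * w 0)" using pos by (simp add: divide_less_eq)
    then show ?thesis using tau_lin[of m] by (intro exI[of _ m]) (simp add: mult.assoc)
  qed
  define n where "n = (LEAST m. u < tau (Suc m))"
  have hn1: "u < tau (Suc n)" unfolding n_def using ex by (rule LeastI_ex)
  have hn0: "tau n \<le> u"
  proof (cases n)
    case 0 then show ?thesis using tau0 u0 by simp
  next
    case (Suc k)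
    then have "\<not> u < tau (Suc k)" using not_less_Least[of k "\<lambda>m. u < tau (Suc m)"] n_def by simp
    then show ?thesis using Suc by simp
  qed
  have cidx_eq: "cidx a1 a2 HO c1 c2 c3 eps del eta xi zeta q0 p0 u = n"
    unfolding n_def cidx_def tau_def S_def ..
  have Xt: "eps * tau n \<le> t" using hn0 eps by (simp add: u_def pos_le_divide_eq mult.commute)
  have XT: "eps * tau n \<le> T" using Xt t by simp
  have X0: "0 \<le> eps * tau n" using tau_nn eps by simp
  have wnb: "w n \<le> Wmax T" using wbound[OF XT] .
  have gap: "t - eps * tau n \<le> eps * (a1 + a2) * Wmax T"
  proof -
    have "tau (Suc n) - tau n = \<bar>q (Suc n) - q n\<bar> * w n" using tau_step by simp
    also have "\<dots> \<le> (a1 + a2) * Wmax T" using len_hi[of n] wnb w_pos[of n] a1 a2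
      by (intro mult_mono) auto
    finally have "u - tau n \<le> (a1 + a2) * Wmax T" using hn1 by simp
    then have "eps * (u - tau n) \<le> eps * ((a1 + a2) * Wmax T)" using eps by (simp add: mult_left_mono)
    moreover have "eps * u = t" using eps by (simp add: u_def)
    ultimately show ?thesis by (simp add: algebra_simps)
  qed
  have wS: "\<bar>w (Suc n) - w n\<bar> \<le> 2 * eps * Gm * Wmax T"
  proof -
    have "w (Suc n) - w n \<le> 2 * eps * Gm * w n" using w_up_step[of n] by (simp add: algebra_simps)
    also have "\<dots> \<le> 2 * eps * Gm * Wmax T" using wnb eps Gm_pos by (simp add: mult_left_mono)
    finally show ?thesis using w_mono_step[of n] by simp
  qed
  define th where "th = (u - tau n) / (tau (Suc n) - tau n)"
  have th: "0 \<le> th" "th \<le> 1" using hn0 hn1 by (auto simp: th_def)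
  have Hh_eq: "Hhat a1 a2 HO c1 c2 c3 eps del eta xi zeta q0 p0 t
     = 1 / (2 * (w n)^2) + (1 / (2 * (w (Suc n))^2) - 1 / (2 * (w n)^2)) * th"
    unfolding Hhat_def Let_def u_def[symmetric] cidx_eq S_def[symmetric] th_def energy_w
    by (simp add: tau_def)
  have ed_eq: "edge_at a1 a2 HO c1 c2 c3 eps del eta xi zeta q0 p0 t = cedge HO (S n)"
    unfolding edge_at_def u_def[symmetric] cidx_eq S_def[symmetric] ..
  have Hbound: "\<bar>Hhat a1 a2 HO c1 c2 c3 eps del eta xi zeta q0 p0 t - 1 / (2 * Wl^2)\<bar> \<le> kap"
    if M: "\<bar>w n - Wl\<bar> + 2 * eps * Gm * Wmax T \<le> Z * (C3 T + CW T)" and Wl: "Wl \<ge> w00" for Wl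
  proof -
    define M where "M = Z * (C3 T + CW T)"
    have w0n: "w n \<ge> w00" "w (Suc n) \<ge> w00" using w_mono[of 0 n] w_mono[of 0 "Suc n"] w00 by auto
    have m1: "\<bar>w n - Wl\<bar> \<le> M" using M wS M_def by linarith
    have m2: "\<bar>w (Suc n) - Wl\<bar> \<le> M" using M wS M_def by linarith
    have w3: "w00^3 > 0" using w00_pos by simp
    have k: "M / w00^3 \<le> kap" using Z1 unfolding M_def Z_def by (simp only: pos_divide_le_eq[OF w3])
    have e1: "\<bar>1 / (2 * (w n)^2) - 1 / (2 * Wl^2)\<bar> \<le> kap"
    proof -
      have "\<bar>1 / (2 * (w n)^2) - 1 / (2 * Wl^2)\<bar> \<le> \<bar>w n - Wl\<bar> / w00^3" by (rule energy_lip[OF w00_pos w0n(1) Wl])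
      also have "\<dots> \<le> M / w00^3" by (rule divide_right_mono[OF m1]) (use w3 in simp)
      finally show ?thesis using k by linarith
    qed
    have e2: "\<bar>1 / (2 * (w (Suc n))^2) - 1 / (2 * Wl^2)\<bar> \<le> kap"
    proof -
      have "\<bar>1 / (2 * (w (Suc n))^2) - 1 / (2 * Wl^2)\<bar> \<le> \<bar>w (Suc n) - Wl\<bar> / w00^3" by (rule energy_lip[OF w00_pos w0n(2) Wl])
      also have "\<dots> \<le> M / w00^3" by (rule divide_right_mono[OF m2]) (use w3 in simp)
      finally show ?thesis using k by linarith
    qed
    show ?thesis unfolding Hh_eq by (rule interp_bound[OF th e1 e2])
  qed
  have CWn: "0 \<le> CW T" "0 \<le> C3 T" using CW_nn[OF T0] C3_nn[OF T0] by auto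
  have A_w: "\<bar>w n - (w00 + k3 * t)\<bar> + 2 * eps * Gm * Wmax T \<le> Z * (C3 T + CW T)" if nN: "n < N"
  proof -
    have p: "\<bar>w n - w00 - k3 * (eps * tau n)\<bar> \<le> E3a T" using P3[of n T] nN XT by simp
    have "k3 * (t - eps * tau n) \<le> k3 * (eps * (a1 + a2) * Wmax T)" using gap k3_pos by (simp add: mult_left_mono)
    then have g: "k3 * (t - eps * tau n) \<le> k3 * eps * (a1 + a2) * Wmax T" by (simp add: mult.assoc)
    have g0: "k3 * (t - eps * tau n) \<ge> 0" using Xt k3_pos by simp
    have "\<bar>w n - (w00 + k3 * t)\<bar> \<le> E3a T + k3 * eps * (a1 + a2) * Wmax T"
      using p g g0 by (simp add: abs_le_iff algebra_simps)
    moreover have "2 * eps * Gm * wO \<ge> 0" using eps Gm_pos wO_pos by simp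
    moreover have "Z * C3 T \<le> Z * (C3 T + CW T)" using CWn Zp by (simp add: mult_left_mono)
    ultimately show ?thesis using err3[OF T0] unfolding Z_def by linarith
  qed
  have B_w: "\<bar>w n - (wO + kW * (t - t0))\<bar> + 2 * eps * Gm * Wmax T \<le> Z * (C3 T + CW T)" if nN: "N \<le> n"
  proof -
    have p: "\<bar>w n - wO - kW * (eps * tau n - t0)\<bar> \<le> EWa T" using PW[OF nN XT] .
    have "kW * (t - eps * tau n) \<le> kW * (eps * (a1 + a2) * Wmax T)" using gap kW_pos by (simp add: mult_left_mono)
    then have g: "kW * (t - eps * tau n) \<le> kW * eps * (a1 + a2) * Wmax T" by (simp add: mult.assoc)
    have g0: "kW * (t - eps * tau n) \<ge> 0" using Xt kW_pos by simp
    have "\<bar>w n - (wO + kW * (t - t0))\<bar> \<le> EWa T + kW * eps * (a1 + a2) * Wmax T"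
      using p g g0 by (simp add: abs_le_iff algebra_simps)
    moreover have "Z * CW T \<le> Z * (C3 T + CW T)" using CWn Zp by (simp add: mult_left_mono)
    ultimately show ?thesis using errW[OF T0] unfolding Z_def by linarith
  qed
  have notB: "\<not> t < t0" if nN: "N \<le> n"
  proof
    assume tt: "t < t0"
    have x: "k3 * \<bar>eps * tau N - t0\<bar> \<le> E3a T + 2 * eps * Gm * wO" using XN[OF nN XT] .
    have "eps * tau N \<le> eps * tau n" using tau_mono[OF nN] eps by (simp add: mult_left_mono)
    then have "t0 - t \<le> \<bar>eps * tau N - t0\<bar>" using Xt by simp
    then have "k3 * (t0 - t) \<le> k3 * \<bar>eps * tau N - t0\<bar>" using k3_pos by (simp add: mult_left_mono)
    moreover have "E3a T + 2 * eps * Gm * wO \<le> Z * (C3 T + CW T)"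
    proof -
      have "2 * eps * Gm * Wmax T + k3 * eps * (a1 + a2) * Wmax T \<ge> 0"
        using eps Gm_pos Wmax_nn[OF T0] k3_pos a1 a2 by simp
      moreover have "Z * C3 T \<le> Z * (C3 T + CW T)" using CWn Zp by (simp add: mult_left_mono)
      ultimately show ?thesis using err3[OF T0] unfolding Z_def by linarith
    qed
    moreover have "Z * (C3 T + CW T) < k3 * (t0 - t)" using Z2 tt unfolding Z_def by simp
    ultimately show False using x by linarith
  qed
  have notA: "\<not> t0 < t" if nN: "n < N"
  proof
    assume tt: "t0 < t"
    have "w n < wO" using hi_iff lt_N_hi[OF nN] by simp
    moreover have "\<bar>w n - (w00 + k3 * t)\<bar> \<le> Z * (C3 T + CW T)" 
    proof -
      have "2 * eps * Gm * Wmax T \<ge> 0" using eps Gm_pos Wmax_nn[OF T0] by simp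
      then show ?thesis using A_w[OF nN] by linarith
    qed
    moreover have "Z * (C3 T + CW T) < k3 * (t - t0)" using Z2 tt unfolding Z_def by simp
    moreover have "w00 + k3 * t0 = wO" using k3_pos by (simp add: t0_def)
    ultimately show False by (simp add: abs_le_iff algebra_simps)
  qed
  have wO_ge: "w00 \<le> wO" using w00_lt by simp
  have resA: "\<bar>Hhat a1 a2 HO c1 c2 c3 eps del eta xi zeta q0 p0 t - 1 / (2 * (w00 + k3 * t)^2)\<bar> \<le> kap"
    if nN: "n < N"
    using Hbound[OF A_w[OF nN]] k3_pos t by simp
  have resB: "\<bar>Hhat a1 a2 HO c1 c2 c3 eps del eta xi zeta q0 p0 t - 1 / (2 * (wO + kW * (t - t0))^2)\<bar> \<le> kap"
    if nN: "N \<le> n"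
  proof -
    have "t0 \<le> t" using notB[OF nN] by simp
    then have "wO + kW * (t - t0) \<ge> w00" using wO_ge kW_pos by (simp add: add_increasing2)
    then show ?thesis using Hbound[OF B_w[OF nN]] by simp
  qed
  have h3t0: "1 / (2 * (w00 + k3 * t0)^2) = HO" using k3_pos wO_sq by (simp add: t0_def)
  show ?thesis
    unfolding Let_def t0_eq
  proof (rule conjI[OF impI conjI[OF impI impI]])
    assume tt: "t < t0"
    then have nN: "n < N" using notB by (meson not_less)
    show "edge_at a1 a2 HO c1 c2 c3 eps del eta xi zeta q0 p0 t = 3 \<and>
      \<bar>Hhat a1 a2 HO c1 c2 c3 eps del eta xi zeta q0 p0 t - Hlim3 a1 a2 c1 c2 (p0\<^sup>2 / 2) t\<bar> \<le> kap"
      using resA[OF nN] ed_eq edge3[OF nN] Hlim3_eq by simp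
  next
    assume tt: "t = t0"
    show "\<bar>Hhat a1 a2 HO c1 c2 c3 eps del eta xi zeta q0 p0 t - HO\<bar> \<le> kap"
    proof (cases "n < N")
      case True then show ?thesis using resA[OF True] tt h3t0 by simp
    next
      case False then show ?thesis using resB[of] tt wO_sq by simp
    qed
  next
    assume tt: "t0 < t"
    then have nN: "N \<le> n" using notA by (meson not_less)
    show "edge_at a1 a2 HO c1 c2 c3 eps del eta xi zeta q0 p0 t = 1 \<and>
      \<bar>Hhat a1 a2 HO c1 c2 c3 eps del eta xi zeta q0 p0 t - Hlim1 a1 c1 c3 HO t0 t\<bar> \<le> kap \<or>
      edge_at a1 a2 HO c1 c2 c3 eps del eta xi zeta q0 p0 t = 2 \<and>
      \<bar>Hhat a1 a2 HO c1 c2 c3 eps del eta xi zeta q0 p0 t - Hlim2 a2 c2 c3 HO t0 t\<bar> \<le> kap"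
      using resB[OF nN] ed_eq edgeW[OF nN] Hlim1_eq Hlim2_eq by (cases wellR) auto
  qed
qed

end

theorem corollary3p1:
  fixes M :: "'w measure"
    and eta xi zeta :: "nat \<Rightarrow> 'w \<Rightarrow> real"
    and a1 a2 HO H0 c1 c2 c3 alpha beta q0 p0 T :: real
  assumes "prob_space M"
    and "a1 > 0" "a2 > 0" "HO > 0" "c1 > 0" "c2 > 0" "c3 > 0"
    and "0 < alpha" "alpha < beta"
    and "\<And>k. eta k \<in> borel_measurable M" "\<And>k. xi k \<in> borel_measurable M"
    and "\<And>k. zeta k \<in> borel_measurable M"
    and "prob_space.indep_vars M (\<lambda>_. borel)
           (\<lambda>(j, k). if j = (0::nat) then eta k else if j = 1 then xi k else zeta k)
           ({0, 1, 2} \<times> UNIV)"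
    and "\<exists>g. continuous_on UNIV g \<and> (\<forall>x. 0 \<le> g x) \<and>
           (\<forall>k. distributed M lborel (eta k) (\<lambda>x. ennreal (g x)))"
    and "\<exists>g. continuous_on UNIV g \<and> (\<forall>x. 0 \<le> g x) \<and>
           (\<forall>k. distributed M lborel (xi k) (\<lambda>x. ennreal (g x)))"
    and "\<exists>g. continuous_on UNIV g \<and> (\<forall>x. 0 \<le> g x) \<and>
           (\<forall>k. distributed M lborel (zeta k) (\<lambda>x. ennreal (g x)))"
    and "\<And>k. measure M {w \<in> space M. alpha < eta k w \<and> eta k w < beta} = 1"
    and "\<And>k. measure M {w \<in> space M. alpha < xi k w \<and> xi k w < beta} = 1"
    and "\<And>k. measure M {w \<in> space M. alpha < zeta k w \<and> zeta k w < beta} = 1"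
    and "-a1 \<le> q0" "q0 \<le> a2" "p0\<^sup>2 / 2 = H0" "H0 > HO"
    and "0 < T"
  shows "\<forall>t. 0 < t \<and> t < T \<longrightarrow> (\<forall>\<kappa>>0. \<forall>e>0.
    \<forall>\<^sub>F (eps, del) in at_right 0 \<times>\<^sub>F at_right 0.
      \<exists>A \<in> sets M. measure M A \<le> e \<and>
        {w \<in> space M.
          \<not> (let t0 = t0_time a1 a2 c1 c2 HO H0;
                 Hh = Hhat a1 a2 HO c1 c2 c3 eps del (\<lambda>k. eta k w) (\<lambda>k. xi k w)
                        (\<lambda>k. zeta k w) q0 p0 t;
                 ed = edge_at a1 a2 HO c1 c2 c3 eps del (\<lambda>k. eta k w) (\<lambda>k. xi k w)
                        (\<lambda>k. zeta k w) q0 p0 t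
             in (t < t0 \<longrightarrow> ed = 3 \<and> \<bar>Hh - Hlim3 a1 a2 c1 c2 H0 t\<bar> \<le> \<kappa>) \<and>
                (t = t0 \<longrightarrow> \<bar>Hh - HO\<bar> \<le> \<kappa>) \<and>
                (t0 < t \<longrightarrow> (ed = 1 \<and> \<bar>Hh - Hlim1 a1 c1 c3 HO t0 t\<bar> \<le> \<kappa>) \<or>
                            (ed = 2 \<and> \<bar>Hh - Hlim2 a2 c2 c3 HO t0 t\<bar> \<le> \<kappa>)))}
        \<subseteq> A)"
proof (intro allI impI)
  fix t kap e :: real
  assume tt: "0 < t \<and> t < T" and kap: "kap > 0" and e: "e > 0"
  note PS = assms(1)
  have p0ne: "p0 \<noteq> 0" using assms(4,22,23) by auto
  have H0eq: "H0 = p0\<^sup>2 / 2" using assms(22) by simp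
  define Cst where "Cst = bil.C3 a1 a2 HO c1 c2 c3 p0 beta T + bil.CW a1 a2 HO c1 c2 c3 p0 beta T"
  define k3 where "k3 = bil.k3 a1 a2 c1 c2"
  define t0 where "t0 = bil.t0 a1 a2 HO c1 c2 p0"
  define w00 where "w00 = bil.w00 p0"
  define Gs where "Gs = c1 + c2 + c3 + beta"
  have Gsp: "Gs > 0" unfolding Gs_def using assms(5,6,7,8,9) by simp
  have inst: "bil a1 a2 HO c1 c2 c3 (1 / (2 * Gs)) 1 (\<lambda>_. 0) (\<lambda>_. 0) (\<lambda>_. 0) q0 p0 beta"
    unfolding bil_def using assms(2-9) assms(20-23) Gsp by (auto simp: Gs_def)
  have k3p: "k3 > 0" unfolding k3_def by (rule bil.k3_pos[OF inst])
  have w00p: "w00 > 0" unfolding w00_def by (rule bil.w00_pos[OF inst])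
  define Q where "Q = min (kap * w00^3) (if t = t0 then 1 else k3 * \<bar>t - t0\<bar>)"
  have Qp: "Q > 0" unfolding Q_def using kap w00p k3p by auto
  define a where "a = min 1 (min (1 / (2 * Gs)) (Q / (4 * (\<bar>Cst\<bar> + 1))))"
  have ap: "a > 0" unfolding a_def using Gsp Qp by simp
  have a1': "a \<le> 1" and a2': "a \<le> 1 / (2 * Gs)" and a3': "a \<le> Q / (4 * (\<bar>Cst\<bar> + 1))"
    unfolding a_def by auto
  have evx: "eventually (\<lambda>x. 0 < x \<and> x < a) (at_right (0::real))"
    unfolding eventually_at_right_field using ap by (intro exI[of _ a]) auto
  have ev: "\<forall>\<^sub>F x in at_right 0 \<times>\<^sub>F at_right 0. (0 < fst x \<and> fst x < a) \<and> (0 < snd x \<and> snd x < a)"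
    by (rule eventually_prodI[OF evx evx])
  have good: "\<exists>N \<in> sets M. measure M N = 0 \<and>
      {w \<in> space M. \<not> (\<forall>k. (alpha < eta k w \<and> eta k w < beta) \<and> (alpha < xi k w \<and> xi k w < beta)
          \<and> (alpha < zeta k w \<and> zeta k w < beta))} \<subseteq> N"
  proof -
    have ae1: "AE w in M. alpha < eta k w \<and> eta k w < beta" for k
      using prob_space.AE_prob_1[OF PS assms(17)[of k]] by (auto elim!: AE_mp intro!: AE_I2)
    have ae2: "AE w in M. alpha < xi k w \<and> xi k w < beta" for k
      using prob_space.AE_prob_1[OF PS assms(18)[of k]] by (auto elim!: AE_mp intro!: AE_I2)
    have ae3: "AE w in M. alpha < zeta k w \<and> zeta k w < beta" for k
      using prob_space.AE_prob_1[OF PS assms(19)[of k]] by (auto elim!: AE_mp intro!: AE_I2)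
    have "AE w in M. \<forall>k. (alpha < eta k w \<and> eta k w < beta) \<and> (alpha < xi k w \<and> xi k w < beta)
          \<and> (alpha < zeta k w \<and> zeta k w < beta)"
      unfolding AE_all_countable using ae1 ae2 ae3 by (auto intro: AE_conjI)
    then obtain N where N: "{w \<in> space M. \<not> (\<forall>k. (alpha < eta k w \<and> eta k w < beta) \<and> (alpha < xi k w \<and> xi k w < beta)
          \<and> (alpha < zeta k w \<and> zeta k w < beta))} \<subseteq> N" "emeasure M N = 0" "N \<in> sets M"
      by (rule AE_E)
    then show ?thesis by (intro bexI[of _ N]) (auto simp: measure_def)
  qed
  then obtain N where N: "N \<in> sets M" "measure M N = 0"
    "{w \<in> space M. \<not> (\<forall>k. (alpha < eta k w \<and> eta k w < beta) \<and> (alpha < xi k w \<and> xi k w < beta)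
          \<and> (alpha < zeta k w \<and> zeta k w < beta))} \<subseteq> N" by blast
  show "\<forall>\<^sub>F (eps, del) in at_right 0 \<times>\<^sub>F at_right 0.
      \<exists>A \<in> sets M. measure M A \<le> e \<and>
        {w \<in> space M.
          \<not> (let t0 = t0_time a1 a2 c1 c2 HO H0;
                 Hh = Hhat a1 a2 HO c1 c2 c3 eps del (\<lambda>k. eta k w) (\<lambda>k. xi k w)
                        (\<lambda>k. zeta k w) q0 p0 t;
                 ed = edge_at a1 a2 HO c1 c2 c3 eps del (\<lambda>k. eta k w) (\<lambda>k. xi k w)
                        (\<lambda>k. zeta k w) q0 p0 t
             in (t < t0 \<longrightarrow> ed = 3 \<and> \<bar>Hh - Hlim3 a1 a2 c1 c2 H0 t\<bar> \<le> kap) \<and>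
                (t = t0 \<longrightarrow> \<bar>Hh - HO\<bar> \<le> kap) \<and>
                (t0 < t \<longrightarrow> (ed = 1 \<and> \<bar>Hh - Hlim1 a1 c1 c3 HO t0 t\<bar> \<le> kap) \<or>
                            (ed = 2 \<and> \<bar>Hh - Hlim2 a2 c2 c3 HO t0 t\<bar> \<le> kap)))}
        \<subseteq> A"
  proof (rule eventually_mono[OF ev])
    fix x :: "real \<times> real"
    assume xa: "(0 < fst x \<and> fst x < a) \<and> (0 < snd x \<and> snd x < a)"
    obtain eps del where xe: "x = (eps, del)" by (cases x)
    have ep: "0 < eps" "eps < a" and dp: "0 < del" "del < a" using xa xe by auto
    have Zb: "(eps + del) * Cst < Q"
    proof -
      have "(eps + del) * Cst \<le> (eps + del) * \<bar>Cst\<bar>" using ep dp by (simp add: mult_left_mono)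
      also have "\<dots> \<le> (2 * a) * (\<bar>Cst\<bar> + 1)" using ep dp by (intro mult_mono) auto
      also have "\<dots> \<le> 2 * (Q / (4 * (\<bar>Cst\<bar> + 1))) * (\<bar>Cst\<bar> + 1)" using a3' by (intro mult_right_mono) auto
      also have "\<dots> = Q / 2" by (simp add: field_simps)
      finally show ?thesis using Qp by linarith
    qed
    have small: "eps * (c1 + c2 + c3 + beta) \<le> 1/2"
    proof -
      have "eps * Gs \<le> a * Gs" using ep Gsp by simp
      also have "\<dots> \<le> 1 / (2 * Gs) * Gs" using a2' Gsp by (intro mult_right_mono) auto
      also have "\<dots> = 1 / 2" using Gsp by simp
      finally show ?thesis unfolding Gs_def .
    qed
    have body: "\<exists>A \<in> sets M. measure M A \<le> e \<and>
        {w \<in> space M.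
          \<not> (let t0 = t0_time a1 a2 c1 c2 HO H0;
                 Hh = Hhat a1 a2 HO c1 c2 c3 eps del (\<lambda>k. eta k w) (\<lambda>k. xi k w)
                        (\<lambda>k. zeta k w) q0 p0 t;
                 ed = edge_at a1 a2 HO c1 c2 c3 eps del (\<lambda>k. eta k w) (\<lambda>k. xi k w)
                        (\<lambda>k. zeta k w) q0 p0 t
             in (t < t0 \<longrightarrow> ed = 3 \<and> \<bar>Hh - Hlim3 a1 a2 c1 c2 H0 t\<bar> \<le> kap) \<and>
                (t = t0 \<longrightarrow> \<bar>Hh - HO\<bar> \<le> kap) \<and>
                (t0 < t \<longrightarrow> (ed = 1 \<and> \<bar>Hh - Hlim1 a1 c1 c3 HO t0 t\<bar> \<le> kap) \<or>
                            (ed = 2 \<and> \<bar>Hh - Hlim2 a2 c2 c3 HO t0 t\<bar> \<le> kap)))}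
        \<subseteq> A"
    proof (intro bexI[of _ N] conjI)
      show "measure M N \<le> e" using N e by simp
      show "N \<in> sets M" by (rule N(1))
      show "{w \<in> space M. \<not> (let t0 = t0_time a1 a2 c1 c2 HO H0;
                 Hh = Hhat a1 a2 HO c1 c2 c3 eps del (\<lambda>k. eta k w) (\<lambda>k. xi k w)
                        (\<lambda>k. zeta k w) q0 p0 t;
                 ed = edge_at a1 a2 HO c1 c2 c3 eps del (\<lambda>k. eta k w) (\<lambda>k. xi k w)
                        (\<lambda>k. zeta k w) q0 p0 t
             in (t < t0 \<longrightarrow> ed = 3 \<and> \<bar>Hh - Hlim3 a1 a2 c1 c2 H0 t\<bar> \<le> kap) \<and>
                (t = t0 \<longrightarrow> \<bar>Hh - HO\<bar> \<le> kap) \<and>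
                (t0 < t \<longrightarrow> (ed = 1 \<and> \<bar>Hh - Hlim1 a1 c1 c3 HO t0 t\<bar> \<le> kap) \<or>
                            (ed = 2 \<and> \<bar>Hh - Hlim2 a2 c2 c3 HO t0 t\<bar> \<le> kap)))} \<subseteq> N"
      proof (rule subsetI)
        fix w assume wA: "w \<in> {w \<in> space M. \<not> (let t0 = t0_time a1 a2 c1 c2 HO H0;
                 Hh = Hhat a1 a2 HO c1 c2 c3 eps del (\<lambda>k. eta k w) (\<lambda>k. xi k w)
                        (\<lambda>k. zeta k w) q0 p0 t;
                 ed = edge_at a1 a2 HO c1 c2 c3 eps del (\<lambda>k. eta k w) (\<lambda>k. xi k w)
                        (\<lambda>k. zeta k w) q0 p0 t
             in (t < t0 \<longrightarrow> ed = 3 \<and> \<bar>Hh - Hlim3 a1 a2 c1 c2 H0 t\<bar> \<le> kap) \<and>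
                (t = t0 \<longrightarrow> \<bar>Hh - HO\<bar> \<le> kap) \<and>
                (t0 < t \<longrightarrow> (ed = 1 \<and> \<bar>Hh - Hlim1 a1 c1 c3 HO t0 t\<bar> \<le> kap) \<or>
                            (ed = 2 \<and> \<bar>Hh - Hlim2 a2 c2 c3 HO t0 t\<bar> \<le> kap)))}"
        show "w \<in> N"
        proof (rule ccontr)
          assume wN: "w \<notin> N"
          then have bnd: "\<forall>k. (alpha < eta k w \<and> eta k w < beta) \<and> (alpha < xi k w \<and> xi k w < beta)
              \<and> (alpha < zeta k w \<and> zeta k w < beta)" using N(3) wA by blast
          have loc: "bil a1 a2 HO c1 c2 c3 eps del (\<lambda>k. eta k w) (\<lambda>k. xi k w) (\<lambda>k. zeta k w) q0 p0 beta"
            unfolding bil_def using assms(2-9) ep dp a1' bnd small assms(20-23)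
            by (auto intro: less_imp_le order_trans[OF less_imp_le[OF assms(8)]])
          have Z1: "(eps + del) * Cst \<le> kap * w00^3" using Zb unfolding Q_def by simp
          have Z2: "t \<noteq> t0 \<Longrightarrow> (eps + del) * Cst < k3 * \<bar>t - t0\<bar>" using Zb unfolding Q_def by simp
          have "let t0' = t0_time a1 a2 c1 c2 HO (p0\<^sup>2 / 2);
             Hh = Hhat a1 a2 HO c1 c2 c3 eps del (\<lambda>k. eta k w) (\<lambda>k. xi k w) (\<lambda>k. zeta k w) q0 p0 t;
             ed = edge_at a1 a2 HO c1 c2 c3 eps del (\<lambda>k. eta k w) (\<lambda>k. xi k w) (\<lambda>k. zeta k w) q0 p0 t
            in (t < t0' \<longrightarrow> ed = 3 \<and> \<bar>Hh - Hlim3 a1 a2 c1 c2 (p0\<^sup>2 / 2) t\<bar> \<le> kap) \<and>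
            (t = t0' \<longrightarrow> \<bar>Hh - HO\<bar> \<le> kap) \<and>
            (t0' < t \<longrightarrow> (ed = 1 \<and> \<bar>Hh - Hlim1 a1 c1 c3 HO t0' t\<bar> \<le> kap) \<or>
                        (ed = 2 \<and> \<bar>Hh - Hlim2 a2 c2 c3 HO t0' t\<bar> \<le> kap))"
            by (rule bil.det_main[OF loc _ _ kap]) (use tt Z1 Z2 in \<open>auto simp: Cst_def w00_def k3_def t0_def\<close>)
          then show False using wA H0eq by simp
        qed
      qed
    qed
    show "case x of (eps, del) \<Rightarrow> \<exists>A \<in> sets M. measure M A \<le> e \<and>
        {w \<in> space M.
          \<not> (let t0 = t0_time a1 a2 c1 c2 HO H0;
                 Hh = Hhat a1 a2 HO c1 c2 c3 eps del (\<lambda>k. eta k w) (\<lambda>k. xi k w)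
                        (\<lambda>k. zeta k w) q0 p0 t;
                 ed = edge_at a1 a2 HO c1 c2 c3 eps del (\<lambda>k. eta k w) (\<lambda>k. xi k w)
                        (\<lambda>k. zeta k w) q0 p0 t
             in (t < t0 \<longrightarrow> ed = 3 \<and> \<bar>Hh - Hlim3 a1 a2 c1 c2 H0 t\<bar> \<le> kap) \<and>
                (t = t0 \<longrightarrow> \<bar>Hh - HO\<bar> \<le> kap) \<and>
                (t0 < t \<longrightarrow> (ed = 1 \<and> \<bar>Hh - Hlim1 a1 c1 c3 HO t0 t\<bar> \<le> kap) \<or>
                            (ed = 2 \<and> \<bar>Hh - Hlim2 a2 c2 c3 HO t0 t\<bar> \<le> kap)))}
        \<subseteq> A"
      using body xe by simp
  qed
qed

end
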